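(* Let $1\le k\le n-1$, let $w\in W^J$, and let $w=s_j\cdots s_h$ be a reduced decomposition of $w$. Then the parabolic Kazhdan–Lusztig element $C'^J_w\in M'$ equals $(T_j-v)\cdots(T_h-v)\,\mathbf 1$.
   Context: Let $\mathcal H$ be the Hecke algebra of $S_n$ over $\mathbb Q(v)$, generated by $T_1,\dots,T_{n-1}$ with braid relations and $(T_i-v)(T_i+v^{-1})=0$; bar involution: ring involution with $\overline v=v^{-1}$, $\overline{T_w}=T_{w^{-1}}^{-1}$. Let $E$ be the set of sequences of $n$ signs $\pm$ with exactly $k$ pluses, with $S_n$ permuting positions ($s_i$ swaps entries $i,i+1$); $\mathbf 1=(+^k,-^{n-k})$. Let $M'=\bigoplus_{\varepsilon\in E}\mathbb Q(v)\varepsilon$ with $\mathcal H$-action: $T_i\varepsilon=s_i\varepsilon$ if $(\varepsilon_i,\varepsilon_{i+1})=(+,-)$; $T_i\varepsilon=v\varepsilon$ if $(\varepsilon_i,\varepsilon_{i+1})\in\{(+,+),(-,-)\}$; $T_i\varepsilon=s_i\varepsilon+(v-v^{-1})\varepsilon$ if $(\varepsilon_i,\varepsilon_{i+1})=(-,+)$. $M'$ carries the bar involution $\overline{h\mathbf 1}=\overline h\,\mathbf 1$. $W^J$ is the set of minimal length representatives of $S_n/(S_k\times S_{n-k})$, and $y\mapsto y(\mathbf 1)$ is a bijection $W^J\to E$. The parabolic Kazhdan–Lusztig element $C'^J_y\in M'$ ($y\in W^J$) is the unique element with $\overline{C'^J_y}=C'^J_y$ and $C'^J_y-y(\mathbf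 1)\in\sum_\varepsilon v\mathbb Z[v]\varepsilon$. *)

theory Defs
  imports "HOL-Computational_Algebra.Computational_Algebra" "HOL-Combinatorics.Transposition"
          "HOL-Combinatorics.Permutations"
begin

text \<open>The field Q(v) of rational functions, the indeterminate v and the
  field involution v to v^-1 (fixing Q).\<close>

type_synonym Qv = "rat poly fract"

definition vv :: Qv where "vv = to_fract [:0, 1:]"

definition barpoly :: "rat poly \<Rightarrow> Qv" where
  "barpoly p = poly (map_poly (\<lambda>c. to_fract [:c:]) p) (inverse vv)"

definition barQ :: "Qv \<Rightarrow> Qv" where
  "barQ x = (let (a, b) = (SOME (a, b). b \<noteq> 0 \<and> x = to_fract a / to_fract b)
             in barpoly a / barpoly b)"

definition vZv :: "Qv set" where
  "vZv = {to_fract (map_poly of_int p) | p :: int poly. coeff p 0 = 0}"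

definition sg :: "nat \<Rightarrow> nat \<Rightarrow> nat" where "sg i = transpose i (Suc i)"

definition wordprod :: "nat list \<Rightarrow> nat \<Rightarrow> nat" where
  "wordprod ws = foldr (\<lambda>i acc. sg i \<circ> acc) ws id"

definition is_word :: "nat \<Rightarrow> nat list \<Rightarrow> bool" where
  "is_word n ws \<longleftrightarrow> set ws \<subseteq> {1..<n}"

definition len :: "nat \<Rightarrow> (nat \<Rightarrow> nat) \<Rightarrow> nat" where
  "len n w = (LEAST r. \<exists>ws. is_word n ws \<and> length ws = r \<and> wordprod ws = w)"

definition reduced_word :: "nat \<Rightarrow> (nat \<Rightarrow> nat) \<Rightarrow> nat list \<Rightarrow> bool" where
  "reduced_word n w ws \<longleftrightarrow> is_word n ws \<and> wordprod ws = w \<and> length ws = len n w"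

definition WJ :: "nat \<Rightarrow> nat \<Rightarrow> (nat \<Rightarrow> nat) set" where
  "WJ n k = {u. u permutes {1..n} \<and> u ` {1..k} = {1..k}}"

definition minWJ :: "nat \<Rightarrow> nat \<Rightarrow> (nat \<Rightarrow> nat) set" where
  "minWJ n k = {w. w permutes {1..n} \<and> (\<forall>u\<in>WJ n k. len n w \<le> len n (w \<circ> u))}"

text \<open>Sign sequences with k pluses are encoded by the set of positions carrying +,
  i.e. k-subsets of {1..n}; S_n acts by image, so s_i swaps entries i, i+1.
  The base sequence 1 = (+^k,-^(n-k)) is {1..k}.\<close>

definition Eset :: "nat \<Rightarrow> nat \<Rightarrow> nat set set" where
  "Eset n k = {e. e \<subseteq> {1..n} \<and> card e = k}"

definition one_seq :: "nat \<Rightarrow> nat set" where "one_seq k = {1..k}"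

type_synonym modM = "nat set \<Rightarrow> Qv"

definition Mset :: "nat \<Rightarrow> nat \<Rightarrow> modM set" where
  "Mset n k = {m. \<forall>e. e \<notin> Eset n k \<longrightarrow> m e = 0}"

definition basis :: "nat set \<Rightarrow> modM" where
  "basis e = (\<lambda>e'. if e' = e then 1 else 0)"

definition restrM :: "nat \<Rightarrow> nat \<Rightarrow> modM \<Rightarrow> modM" where
  "restrM n k m = (\<lambda>e. if e \<in> Eset n k then m e else 0)"

text \<open>Action of T_i on M' (linear extension of the given action on basis vectors):
  T_i e = s_i e for (+,-); v e for (+,+),(-,-); s_i e + (v - v^-1) e for (-,+).\<close>
definition Tact :: "nat \<Rightarrow> modM \<Rightarrow> modM" where
  "Tact i m = (\<lambda>e.
     if (i \<in> e) = (Suc i \<in> e) then vv * m e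
     else if i \<notin> e \<and> Suc i \<in> e then m (sg i ` e) + (vv - inverse vv) * m e
     else m (sg i ` e))"

text \<open>The bar involution on M': the unique Z-additive, bar-semilinear map with
  bar(1) = 1 and bar(T_i m) = T_i^-1 bar(m) (equivalent to bar(h 1) = bar(h) 1,
  since H is generated by the T_i, their inverses and scalars).  It is taken to
  factor through the restriction to E so that it is uniquely determined.\<close>
definition is_barM :: "nat \<Rightarrow> nat \<Rightarrow> (modM \<Rightarrow> modM) \<Rightarrow> bool" where
  "is_barM n k b \<longleftrightarrow>
     (\<forall>m. b m = b (restrM n k m)) \<and>
     (\<forall>m \<in> Mset n k. b m \<in> Mset n k) \<and>
     (\<forall>m1 \<in> Mset n k. \<forall>m2 \<in> Mset n k. b (\<lambda>e. m1 e + m2 e) = (\<lambda>e. b m1 e + b m2 e)) \<and>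
     (\<forall>c. \<forall>m \<in> Mset n k. b (\<lambda>e. c * m e) = (\<lambda>e. barQ c * b m e)) \<and>
     b (basis (one_seq k)) = basis (one_seq k) \<and>
     (\<forall>i \<in> {1..<n}. \<forall>m \<in> Mset n k. Tact i (b (Tact i m)) = b m)"

definition barM :: "nat \<Rightarrow> nat \<Rightarrow> modM \<Rightarrow> modM" where
  "barM n k = (THE b. is_barM n k b)"

definition parKL :: "nat \<Rightarrow> nat \<Rightarrow> (nat \<Rightarrow> nat) \<Rightarrow> modM" where
  "parKL n k y = (THE m. m \<in> Mset n k \<and> barM n k m = m \<and>
      (\<forall>e \<in> Eset n k. m e - basis (y ` one_seq k) e \<in> vZv))"

definition Tminus_word :: "nat list \<Rightarrow> modM \<Rightarrow> modM" where
  "Tminus_word ws m = foldr (\<lambda>i x. (\<lambda>e. Tact i x e - vv * x e)) ws m"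

end

theory Submission
  imports Defs
begin
definition fc :: "rat \<Rightarrow> Qv" where "fc c = to_fract [:c:]"

lemma fc_simps[simp]: "fc 0 = 0" "fc 1 = 1" "fc (a + b) = fc a + fc b" "fc (a * b) = fc a * fc b"
  "fc a = 0 \<longleftrightarrow> a = 0"
proof -
  show "fc 0 = 0" by (simp add: fc_def)
  show "fc 1 = 1" by (simp add: fc_def one_pCons[symmetric])
  have "[:a + b:] = [:a:] + [:b:]" by simp
  then show "fc (a + b) = fc a + fc b" unfolding fc_def by (metis to_fract_add)
  have "[:a * b:] = [:a:] * [:b:]" by simp
  then show "fc (a * b) = fc a * fc b" unfolding fc_def by (metis to_fract_mult)
  show "fc a = 0 \<longleftrightarrow> a = 0" by (simp add: fc_def)
qed

definition ev :: "Qv \<Rightarrow> rat poly \<Rightarrow> Qv" where "ev t p = poly (map_poly fc p) t"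

lemma map_fc_add: "map_poly fc (p + q) = map_poly fc p + map_poly fc q"
  by (rule poly_eqI) (simp add: coeff_map_poly)

lemma ev_add[simp]: "ev t (p + q) = ev t p + ev t q"
  by (simp add: ev_def map_fc_add)

lemma ev_0[simp]: "ev t 0 = 0" by (simp add: ev_def)
lemma ev_1[simp]: "ev t 1 = 1" by (simp add: ev_def one_pCons map_poly_pCons)

lemma ev_pCons: "ev t (pCons a p) = fc a + t * ev t p"
  by (simp add: ev_def map_poly_pCons)

lemma ev_smult: "ev t (smult a p) = fc a * ev t p"
  by (simp add: ev_def map_poly_smult)

lemma ev_mult[simp]: "ev t (p * q) = ev t p * ev t q"
proof (induction p rule: pCons_induct)
  case 0 then show ?case by simp
next
  case (pCons a p)
  have "pCons a p * q = smult a q + pCons 0 (p * q)" by (simp add: mult_pCons_left)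
  then have "ev t (pCons a p * q) = fc a * ev t q + t * ev t (p * q)"
    by (simp add: ev_smult ev_pCons)
  also have "\<dots> = ev t (pCons a p) * ev t q" using pCons.IH by (simp add: ev_pCons algebra_simps)
  finally show ?case .
qed

lemma ev_vv: "ev vv q = to_fract q"
proof (induction q rule: pCons_induct)
  case 0 then show ?case by simp
next
  case (pCons a p)
  have "pCons a p = [:a:] + [:0,1:] * p" by simp
  then have "to_fract (pCons a p) = to_fract [:a:] + vv * to_fract p"
    by (metis to_fract_add to_fract_mult vv_def)
  then show ?case using pCons by (simp add: ev_pCons fc_def)
qed

lemma vv_nz[simp]: "vv \<noteq> 0" by (simp add: vv_def)

lemma barpoly_ev: "barpoly p = ev (inverse vv) p"
  by (simp add: barpoly_def ev_def fc_def[abs_def])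

lemma deg_map_fc[simp]: "degree (map_poly fc p) = degree p"
  by (rule degree_map_poly) simp

lemma reflect_map_fc: "reflect_poly (map_poly fc p) = map_poly fc (reflect_poly p)"
  by (rule poly_eqI) (simp add: coeff_reflect_poly coeff_map_poly)

lemma reflect_ev: "to_fract (reflect_poly p) = vv ^ degree p * ev (inverse vv) p"
proof -
  have "to_fract (reflect_poly p) = poly (reflect_poly (map_poly fc p)) vv"
    using ev_vv[of "reflect_poly p"] by (simp add: ev_def reflect_map_fc)
  also have "\<dots> = vv ^ degree p * ev (inverse vv) p"
    by (simp add: poly_reflect_poly_nz ev_def)
  finally show ?thesis .
qed

lemma barpoly_nz: "p \<noteq> 0 \<Longrightarrow> barpoly p \<noteq> 0"
  using reflect_ev[of p] by (auto simp: barpoly_ev)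

lemma barpoly_hom[simp]: "barpoly (p + q) = barpoly p + barpoly q" "barpoly (p * q) = barpoly p * barpoly q"
  "barpoly 1 = 1" "barpoly 0 = 0"
  by (simp_all add: barpoly_ev)

lemma fract_rep: "\<exists>a b. b \<noteq> 0 \<and> x = to_fract a / to_fract b"
  by (cases x) (auto simp: Fract_conv_to_fract)

lemma barQ_eq:
  assumes "b \<noteq> 0" shows "barQ (to_fract a / to_fract b) = barpoly a / barpoly b"
proof -
  let ?x = "to_fract a / to_fract b"
  let ?P = "\<lambda>(a', b'). b' \<noteq> 0 \<and> ?x = to_fract a' / to_fract b'"
  have ex: "\<exists>ab. ?P ab" using assms by auto
  obtain a' b' where ab: "(SOME ab. ?P ab) = (a', b')" by (cases "SOME ab. ?P ab") auto
  from someI_ex[OF ex] ab have b': "b' \<noteq> 0" and eq: "?x = to_fract a' / to_fract b'" by auto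
  from eq assms b' have "to_fract (a * b') = to_fract (a' * b)"
    by (simp add: field_simps)
  then have "a * b' = a' * b" by (simp only: to_fract_eq_iff)
  then have "barpoly a * barpoly b' = barpoly a' * barpoly b" by (metis barpoly_hom(2))
  then have "barpoly a / barpoly b = barpoly a' / barpoly b'"
    using barpoly_nz[OF assms] barpoly_nz[OF b'] by (simp add: field_simps)
  then show ?thesis unfolding barQ_def using ab by simp
qed

lemma barQ_to_fract: "barQ (to_fract a) = barpoly a"
  using barQ_eq[of 1 a] by simp

lemma barQ_add[simp]: "barQ (x + y) = barQ x + barQ y"
proof -
  obtain a b where ab: "b \<noteq> 0" "x = to_fract a / to_fract b" using fract_rep by blast
  obtain c d where cd: "d \<noteq> 0" "y = to_fract c / to_fract d" using fract_rep by blast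
  have bd: "b * d \<noteq> 0" using ab cd by simp
  have xy: "x + y = to_fract (a * d + c * b) / to_fract (b * d)" using ab cd by (simp add: field_simps)
  have "barQ (x + y) = barpoly (a * d + c * b) / barpoly (b * d)"
    unfolding xy by (rule barQ_eq[OF bd])
  also have "\<dots> = barpoly a / barpoly b + barpoly c / barpoly d"
    using barpoly_nz[OF ab(1)] barpoly_nz[OF cd(1)] by (simp add: field_simps)
  finally show ?thesis using ab cd barQ_eq by simp
qed

lemma barQ_mult[simp]: "barQ (x * y) = barQ x * barQ y"
proof -
  obtain a b where ab: "b \<noteq> 0" "x = to_fract a / to_fract b" using fract_rep by blast
  obtain c d where cd: "d \<noteq> 0" "y = to_fract c / to_fract d" using fract_rep by blast
  have bd: "b * d \<noteq> 0" using ab cd by simp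
  have xy: "x * y = to_fract (a * c) / to_fract (b * d)" using ab cd by (simp add: field_simps)
  have "barQ (x * y) = barpoly (a * c) / barpoly (b * d)"
    unfolding xy by (rule barQ_eq[OF bd])
  also have "\<dots> = barpoly a / barpoly b * (barpoly c / barpoly d)"
    using barpoly_nz[OF ab(1)] barpoly_nz[OF cd(1)] by (simp add: field_simps)
  finally show ?thesis using ab cd barQ_eq by simp
qed

lemma barQ_0[simp]: "barQ 0 = 0" using barQ_to_fract[of 0] by simp
lemma barQ_1[simp]: "barQ 1 = 1" using barQ_to_fract[of 1] by simp
lemma barQ_vv[simp]: "barQ vv = inverse vv"
  using barQ_to_fract[of "[:0,1:]"] by (simp add: vv_def barpoly_ev ev_pCons)
lemma barQ_uminus[simp]: "barQ (- x) = - barQ x"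
  using barQ_add[of x "-x"] by (simp add: eq_neg_iff_add_eq_0)
lemma barQ_diff[simp]: "barQ (x - y) = barQ x - barQ y"
  using barQ_add[of x "-y"] by simp
lemma barQ_ivv[simp]: "barQ (inverse vv) = vv"
proof -
  have "barQ (inverse vv * vv) = 1" by simp
  then have "barQ (inverse vv) * inverse vv = 1" by (simp only: barQ_mult barQ_vv)
  then show ?thesis by (simp add: field_simps)
qed
lemma barQ_sum: "barQ (sum f A) = (\<Sum>x\<in>A. barQ (f x))"
  by (induction A rule: infinite_finite_induct) auto

lemma to_fract_power: "to_fract (x ^ n) = to_fract x ^ n"
  by (induction n) simp_all

lemma vZv_fixed_zero:
  assumes "x \<in> vZv" "barQ x = x" shows "x = 0"
proof -
  obtain p :: "int poly" where p: "x = to_fract (map_poly of_int p)" "coeff p 0 = 0"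
    using assms(1) unfolding vZv_def by blast
  define q :: "rat poly" where "q = map_poly of_int p"
  have q0: "coeff q 0 = 0" using p by (simp add: q_def coeff_map_poly)
  have "to_fract (reflect_poly q) = vv ^ degree q * barQ x"
    using reflect_ev[of q] p by (simp add: q_def barQ_to_fract barpoly_ev)
  also have "\<dots> = vv ^ degree q * to_fract q" using assms p by (simp add: q_def)
  also have "vv ^ degree q = to_fract (monom 1 (degree q))"
    by (simp add: vv_def monom_altdef to_fract_power)
  finally have "reflect_poly q = monom 1 (degree q) * q"
    by (metis to_fract_eq_iff to_fract_mult)
  show "x = 0"
  proof (rule ccontr)
    assume "x \<noteq> 0"
    then have qnz: "q \<noteq> 0" using p by (auto simp: q_def)
    have "degree (monom (1::rat) (degree q) * q) = degree q + degree q"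
      using qnz by (simp add: degree_mult_eq degree_monom_eq)
    moreover have "degree (reflect_poly q) \<le> degree q" by (rule degree_reflect_poly_le)
    ultimately have "degree q = 0" using \<open>reflect_poly q = _\<close> by simp
    then have "q = [:coeff q 0:]" by (metis degree_0_id)
    then show False using q0 qnz by simp
  qed
qed

lemma sg_apply: "sg i x = (if x = i then Suc i else if x = Suc i then i else x)"
  by (simp add: sg_def transpose_def)

lemma sg_invol[simp]: "sg i (sg i x) = x"
  by (simp add: sg_apply)

lemma mem_sg[simp]: "x \<in> sg i ` A \<longleftrightarrow> sg i x \<in> A"
  by (metis image_iff sg_invol)

lemma sg_sg_img[simp]: "sg i ` sg i ` A = A"
  by auto

lemma sg_img_same: "(i \<in> A \<longleftrightarrow> Suc i \<in> A) \<Longrightarrow> sg i ` A = A"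
  by (auto simp: sg_apply)

lemma sg_comm: "Suc i < j \<or> Suc j < i \<Longrightarrow> sg i ` sg j ` A = sg j ` sg i ` A"
  by (auto simp: sg_apply)

definition U :: "nat \<Rightarrow> modM \<Rightarrow> modM" where
  "U i x = (\<lambda>f. Tact i x f - vv * x f)"

lemma U_eq: "U i x f = (if (i\<in>f) = (Suc i\<in>f) then 0 else if i \<notin> f \<and> Suc i \<in> f
   then x (sg i ` f) - inverse vv * x f else x (sg i ` f) - vv * x f)"
  by (simp add: U_def Tact_def algebra_simps)

lemma O1: assumes "Suc i < j \<or> Suc j < i" shows "U i (U j x) = U j (U i x)"
proof (rule ext)
  fix f
  have c: "sg i ` sg j ` f = sg j ` sg i ` f" using sg_comm[OF assms] .
  have d: "sg i j = j" "sg i (Suc j) = Suc j" "sg j i = i" "sg j (Suc i) = Suc i"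
    using assms by (auto simp: sg_apply)
  show "U i (U j x) f = U j (U i x) f"
    unfolding U_eq using c d by (simp add: algebra_simps)
qed

lemma O2: "U i (U i x) = (\<lambda>f. - (vv + inverse vv) * U i x f)"
proof (rule ext)
  fix f
  have d: "sg i i = Suc i" "sg i (Suc i) = i" by (auto simp: sg_apply)
  show "U i (U i x) f = - (vv + inverse vv) * U i x f"
    unfolding U_eq using d by (simp add: field_simps)
qed

lemma O4: "Tact i (\<lambda>f. U i y f + inverse vv * y f) = y"
proof (rule ext)
  fix f
  have d: "sg i i = Suc i" "sg i (Suc i) = i" by (auto simp: sg_apply)
  show "Tact i (\<lambda>f. U i y f + inverse vv * y f) f = y f"
    unfolding U_eq Tact_def using d by (simp add: field_simps)
qed

lemma O5: "(\<lambda>f. U i (Tact i z) f + inverse vv * Tact i z f) = z"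
proof (rule ext)
  fix f
  have d: "sg i i = Suc i" "sg i (Suc i) = i" by (auto simp: sg_apply)
  show "U i (Tact i z) f + inverse vv * Tact i z f = z f"
    unfolding U_eq Tact_def using d by (simp add: field_simps)
qed

lemma O3a: "U i (U (Suc i) (U i x)) = U i x"
proof (rule ext)
  fix f
  have d: "sg i i = Suc i" "sg i (Suc i) = i" "sg i (Suc (Suc i)) = Suc (Suc i)"
    "sg (Suc i) i = i" "sg (Suc i) (Suc i) = Suc (Suc i)" "sg (Suc i) (Suc (Suc i)) = Suc i"
    by (auto simp: sg_apply)
  show "U i (U (Suc i) (U i x)) f = U i x f"
    unfolding U_eq using d
    by (cases "i \<in> f"; cases "Suc i \<in> f"; cases "Suc (Suc i) \<in> f"; simp add: sg_img_same field_simps)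
qed

lemma O3b: "U (Suc i) (U i (U (Suc i) x)) = U (Suc i) x"
proof (rule ext)
  fix f
  have d: "sg i i = Suc i" "sg i (Suc i) = i" "sg i (Suc (Suc i)) = Suc (Suc i)"
    "sg (Suc i) i = i" "sg (Suc i) (Suc i) = Suc (Suc i)" "sg (Suc i) (Suc (Suc i)) = Suc i"
    by (auto simp: sg_apply)
  show "U (Suc i) (U i (U (Suc i) x)) f = U (Suc i) x f"
    unfolding U_eq using d
    by (cases "i \<in> f"; cases "Suc i \<in> f"; cases "Suc (Suc i) \<in> f"; simp add: sg_img_same field_simps)
qed

lemma E_finite[simp]: "finite (Eset n k)"
proof -
  have "Eset n k \<subseteq> Pow {1..n}" by (auto simp: Eset_def)
  then show ?thesis by (rule finite_subset) simp
qed

lemma E_fin_el: "e \<in> Eset n k \<Longrightarrow> finite e"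
  unfolding Eset_def using finite_subset by auto

lemma inj_sg: "inj (sg i)"
  by (metis injI sg_invol)

lemma E_sg: assumes "e \<in> Eset n k" "1 \<le> i" "i < n" shows "sg i ` e \<in> Eset n k"
proof -
  have "card (sg i ` e) = card e" using inj_sg by (meson card_image inj_on_subset[OF inj_sg] subset_UNIV)
  moreover have "sg i ` e \<subseteq> {1..n}" using assms by (auto simp: Eset_def sg_apply)
  ultimately show ?thesis using assms by (auto simp: Eset_def)
qed

lemma E_sg_iff: assumes "1 \<le> i" "i < n" shows "sg i ` f \<in> Eset n k \<longleftrightarrow> f \<in> Eset n k"
  using E_sg[OF _ assms] by (metis sg_sg_img)

lemma sum_sg_gen: assumes "finite e" "i \<in> e" "Suc i \<notin> e"
  shows "\<Sum>(sg i ` e) = \<Sum>e + 1"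
proof -
  have "\<Sum>(sg i ` e) = (\<Sum>x\<in>e. sg i x)" by (simp add: sum.reindex inj_sg inj_on_subset[OF inj_sg])
  also have "\<dots> = sg i i + (\<Sum>x\<in>e - {i}. sg i x)" using assms by (simp add: sum.remove)
  also have "(\<Sum>x\<in>e - {i}. sg i x) = (\<Sum>x\<in>e - {i}. x)"
    by (rule sum.cong) (use assms in \<open>auto simp: sg_apply\<close>)
  also have "\<Sum>e = i + (\<Sum>x\<in>e - {i}. x)" using assms by (simp add: sum.remove)
  ultimately show ?thesis by (simp add: sg_apply)
qed

lemma sum_sg_down: assumes "finite e" "i \<notin> e" "Suc i \<in> e"
  shows "\<Sum>(sg i ` e) + 1 = \<Sum>e"
proof -
  let ?e = "sg i ` e"
  have "i \<in> ?e" "Suc i \<notin> ?e" using assms by (auto simp: sg_apply)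
  from sum_sg_gen[OF _ this] assms show ?thesis by simp
qed

lemma sum_sg_same: "(i \<in> e \<longleftrightarrow> Suc i \<in> e) \<Longrightarrow> \<Sum>(sg i ` e) = \<Sum>e"
  by (simp add: sg_img_same)

definition desc :: "nat \<Rightarrow> nat set \<Rightarrow> nat \<Rightarrow> bool" where
  "desc n e i \<longleftrightarrow> 1 \<le> i \<and> i < n \<and> i \<notin> e \<and> Suc i \<in> e"

lemma exists_desc:
  assumes "e \<in> Eset n k" "e \<noteq> {1..k}" shows "\<exists>i. desc n e i"
proof -
  have fe: "finite e" using E_fin_el[OF assms(1)] .
  have en: "e \<subseteq> {1..n}" and ce: "card e = k" using assms(1) by (auto simp: Eset_def)
  have "\<not> e \<subseteq> {1..k}"
  proof
    assume "e \<subseteq> {1..k}"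
    then have "e = {1..k}" using ce by (intro card_subset_eq) auto
    then show False using assms by simp
  qed
  then obtain x where x0: "x \<in> e" "x \<notin> {1..k}" by blast
  then have x: "x \<in> e" "x > k" using en by auto
  have "\<not> {1..k} \<subseteq> e"
  proof
    assume "{1..k} \<subseteq> e"
    then have "{1..k} = e" using ce fe by (intro card_subset_eq) auto
    then show False using assms by simp
  qed
  then obtain y where y0: "y \<in> {1..k}" "y \<notin> e" by blast
  then have y: "1 \<le> y" "y \<le> k" "y \<notin> e" by auto
  define S where "S = {z. y \<le> z \<and> z < x \<and> z \<notin> e}"
  have yS: "y \<in> S" using x y by (auto simp: S_def)
  have fS: "finite S" by (rule finite_subset[of _ "{..<x}"]) (auto simp: S_def)
  define z where "z = Max S"
  have zS: "z \<in> S" using yS fS z_def Max_in by auto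
  have zmax: "\<And>z'. z' \<in> S \<Longrightarrow> z' \<le> z" using fS z_def by auto
  have "Suc z \<in> e"
  proof (rule ccontr)
    assume nz: "Suc z \<notin> e"
    have "Suc z \<noteq> x" using nz x by auto
    then have "Suc z \<in> S" using zS nz by (auto simp: S_def)
    from zmax[OF this] show False by simp
  qed
  moreover have "1 \<le> z" "z < n" "z \<notin> e" using zS y x en by (auto simp: S_def)
  ultimately show ?thesis unfolding desc_def by blast
qed

definition i0 :: "nat \<Rightarrow> nat set \<Rightarrow> nat" where "i0 n e = (LEAST i. desc n e i)"

fun Dfuel :: "nat \<Rightarrow> nat \<Rightarrow> nat \<Rightarrow> nat set \<Rightarrow> modM" where
  "Dfuel n k 0 e = basis (one_seq k)"
| "Dfuel n k (Suc t) e = (if \<exists>i. desc n e i then U (i0 n e) (Dfuel n k t (sg (i0 n e) ` e))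
     else basis (one_seq k))"

definition DD :: "nat \<Rightarrow> nat \<Rightarrow> nat set \<Rightarrow> modM" where
  "DD n k e = Dfuel n k (\<Sum>e) e"

lemma DD_one: "\<not> (\<exists>i. desc n e i) \<Longrightarrow> DD n k e = basis (one_seq k)"
  unfolding DD_def by (cases "\<Sum>e") auto

lemma i0_desc: "desc n e i \<Longrightarrow> desc n e (i0 n e)"
  unfolding i0_def by (rule LeastI)

lemma i0_least: "desc n e i \<Longrightarrow> i0 n e \<le> i"
  unfolding i0_def by (rule Least_le)

lemma DD_step: assumes "finite e" "desc n e i"
  shows "DD n k e = U (i0 n e) (DD n k (sg (i0 n e) ` e))"
proof -
  have d: "desc n e (i0 n e)" using i0_desc[OF assms(2)] .
  then have "\<Sum>(sg (i0 n e) ` e) + 1 = \<Sum>e" using sum_sg_down[OF assms(1)] unfolding desc_def by blast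
  then have s: "\<Sum>e = Suc (\<Sum>(sg (i0 n e) ` e))" by simp
  have ex: "\<exists>i. desc n e i" using assms(2) by blast
  show ?thesis unfolding DD_def s by (simp add: ex)
qed

lemma P3: assumes "e \<in> Eset n k" "desc n e j"
  shows "DD n k e = U j (DD n k (sg j ` e))"
  using assms
proof (induction "\<Sum>e" arbitrary: e j rule: less_induct)
  case less
  note e = less.prems(1)
  have fe: "finite e" using E_fin_el e .
  let ?i = "i0 n e"
  have di: "desc n e ?i" using i0_desc less.prems(2) .
  have st: "DD n k e = U ?i (DD n k (sg ?i ` e))" using DD_step[OF fe less.prems(2)] .
  show ?case
  proof (cases "j = ?i")
    case True then show ?thesis using st by simp
  next
    case False
    have far: "Suc ?i < j \<or> Suc j < ?i" using False di less.prems(2) unfolding desc_def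
      by (metis Suc_lessI not_less_iff_gr_or_eq)
    have sd: "sg ?i j = j" "sg ?i (Suc j) = Suc j" "sg j ?i = ?i" "sg j (Suc ?i) = Suc ?i"
      using far by (auto simp: sg_apply)
    have e1: "sg ?i ` e \<in> Eset n k" using E_sg e di by (auto simp: desc_def)
    have e2: "sg j ` e \<in> Eset n k" using E_sg e less.prems(2) by (auto simp: desc_def)
    have d1: "desc n (sg ?i ` e) j" using less.prems(2) sd by (auto simp: desc_def)
    have d2: "desc n (sg j ` e) ?i" using di sd by (auto simp: desc_def)
    have "\<Sum>(sg ?i ` e) + 1 = \<Sum>e" using sum_sg_down[OF fe] di unfolding desc_def by blast
    then have s1: "\<Sum>(sg ?i ` e) < \<Sum>e" by simp
    have "\<Sum>(sg j ` e) + 1 = \<Sum>e" using sum_sg_down[OF fe] less.prems(2) unfolding desc_def by blast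
    then have s2: "\<Sum>(sg j ` e) < \<Sum>e" by simp
    have h1: "DD n k (sg ?i ` e) = U j (DD n k (sg j ` sg ?i ` e))"
      using less.hyps[OF s1 e1 d1] .
    have h2: "DD n k (sg j ` e) = U ?i (DD n k (sg ?i ` sg j ` e))"
      using less.hyps[OF s2 e2 d2] .
    have c: "sg j ` sg ?i ` e = sg ?i ` sg j ` e" using sg_comm far by metis
    show ?thesis using st h1 h2 c O1[OF far] by simp
  qed
qed

lemma one_E: "k \<le> n \<Longrightarrow> one_seq k \<in> Eset n k"
  by (simp add: one_seq_def Eset_def)

lemma basis_M: "e \<in> Eset n k \<Longrightarrow> basis e \<in> Mset n k"
  by (auto simp: basis_def Mset_def)

lemma U_M: assumes "x \<in> Mset n k" "1 \<le> i" "i < n" shows "U i x \<in> Mset n k"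
proof -
  have "U i x f = 0" if "f \<notin> Eset n k" for f
  proof -
    have "sg i ` f \<notin> Eset n k" using E_sg_iff[OF assms(2,3)] that by blast
    then show ?thesis using assms(1) that unfolding Mset_def U_eq by simp
  qed
  then show ?thesis by (simp add: Mset_def)
qed

lemma no_desc_one: assumes "e \<in> Eset n k" "\<not> (\<exists>i. desc n e i)" shows "e = one_seq k"
  using exists_desc[OF assms(1)] assms(2) by (auto simp: one_seq_def)

lemma DD_cases: assumes "e \<in> Eset n k"
  shows "(e = one_seq k \<and> DD n k e = basis (one_seq k)) \<or>
    (\<exists>i. desc n e i \<and> 1 \<le> i \<and> i < n \<and> i \<notin> e \<and> Suc i \<in> e \<and>
       DD n k e = U i (DD n k (sg i ` e)) \<and> sg i ` e \<in> Eset n k \<and> \<Sum>(sg i ` e) < \<Sum>e)"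
proof (cases "\<exists>i. desc n e i")
  case False
  then show ?thesis using no_desc_one[OF assms False] DD_one[OF False] by simp
next
  case True
  then obtain i where d: "desc n e i" by blast
  have fe: "finite e" using E_fin_el[OF assms] .
  have "DD n k e = U i (DD n k (sg i ` e))" using P3[OF assms d] .
  moreover have "sg i ` e \<in> Eset n k" using E_sg[OF assms] d by (simp add: desc_def)
  moreover have "\<Sum>(sg i ` e) + 1 = \<Sum>e" using sum_sg_down[OF fe] d unfolding desc_def by blast
  ultimately show ?thesis using d unfolding desc_def by auto
qed

lemma DD_M: "e \<in> Eset n k \<Longrightarrow> DD n k e \<in> Mset n k"
proof (induction "\<Sum>e" arbitrary: e rule: less_induct)
  case less
  from DD_cases[OF less.prems] show ?case
  proof
    assume "e = one_seq k \<and> DD n k e = basis (one_seq k)"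
    then show ?thesis using basis_M less.prems by metis
  next
    assume "\<exists>i. desc n e i \<and> 1 \<le> i \<and> i < n \<and> i \<notin> e \<and> Suc i \<in> e \<and>
       DD n k e = U i (DD n k (sg i ` e)) \<and> sg i ` e \<in> Eset n k \<and> \<Sum>(sg i ` e) < \<Sum>e"
    then obtain i where i: "1 \<le> i" "i < n" "DD n k e = U i (DD n k (sg i ` e))"
      "sg i ` e \<in> Eset n k" "\<Sum>(sg i ` e) < \<Sum>e" by blast
    show ?thesis using U_M[OF less.hyps[OF i(5) i(4)] i(1,2)] i(3) by simp
  qed
qed

lemma M_E: "x \<in> Mset n k \<Longrightarrow> x f \<noteq> 0 \<Longrightarrow> f \<in> Eset n k"
  by (auto simp: Mset_def)

lemma sum_sg_le: "finite f \<Longrightarrow> \<Sum>f \<le> \<Sum>(sg i ` f) + 1"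
proof -
  assume ff: "finite f"
  consider "i \<in> f" "Suc i \<notin> f" | "i \<notin> f" "Suc i \<in> f" | "i \<in> f \<longleftrightarrow> Suc i \<in> f" by blast
  then show ?thesis
  proof cases
    case 1 then show ?thesis using sum_sg_gen[OF ff] by simp
  next
    case 2 then show ?thesis using sum_sg_down[OF ff] by fastforce
  next
    case 3 then show ?thesis using sum_sg_same by simp
  qed
qed

lemma DD_tri: "e \<in> Eset n k \<Longrightarrow> DD n k e f \<noteq> 0 \<Longrightarrow> f = e \<or> \<Sum>f < \<Sum>e"
proof (induction "\<Sum>e" arbitrary: e f rule: less_induct)
  case less
  from DD_cases[OF less.prems(1)] show ?case
  proof
    assume "e = one_seq k \<and> DD n k e = basis (one_seq k)"
    then show ?thesis using less.prems(2) by (auto simp: basis_def split: if_splits)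
  next
    assume "\<exists>i. desc n e i \<and> 1 \<le> i \<and> i < n \<and> i \<notin> e \<and> Suc i \<in> e \<and>
       DD n k e = U i (DD n k (sg i ` e)) \<and> sg i ` e \<in> Eset n k \<and> \<Sum>(sg i ` e) < \<Sum>e"
    then obtain i where i: "1 \<le> i" "i < n" "DD n k e = U i (DD n k (sg i ` e))"
      "sg i ` e \<in> Eset n k" "\<Sum>(sg i ` e) < \<Sum>e" "i \<notin> e" "Suc i \<in> e" by blast
    have fE: "f \<in> Eset n k" using M_E[OF DD_M[OF less.prems(1)] less.prems(2)] .
    have ff: "finite f" using E_fin_el[OF fE] .
    let ?x = "DD n k (sg i ` e)"
    have nz: "?x (sg i ` f) \<noteq> 0 \<or> ?x f \<noteq> 0"
      using less.prems(2) i(3) unfolding U_eq by (auto split: if_splits)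
    then show ?thesis
    proof
      assume "?x (sg i ` f) \<noteq> 0"
      from less.hyps[OF i(5) i(4) this] have "sg i ` f = sg i ` e \<or> \<Sum>(sg i ` f) < \<Sum>(sg i ` e)" .
      then show ?thesis
      proof
        assume "sg i ` f = sg i ` e" then have "f = e" by (metis sg_sg_img)
        then show ?thesis by simp
      next
        assume "\<Sum>(sg i ` f) < \<Sum>(sg i ` e)"
        moreover have "\<Sum>(sg i ` e) + 1 = \<Sum>e" using sum_sg_down[OF E_fin_el[OF less.prems(1)] i(6,7)] .
        ultimately show ?thesis using sum_sg_le[OF ff, of i] by linarith
      qed
    next
      assume "?x f \<noteq> 0"
      from less.hyps[OF i(5) i(4) this] i(5) show ?thesis by auto
    qed
  qed
qed

lemma DD_step_obtain:
  assumes "e \<in> Eset n k" "e \<noteq> one_seq k"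
  obtains i where "1 \<le> i" "i < n" "i \<notin> e" "Suc i \<in> e" "DD n k e = U i (DD n k (sg i ` e))"
      "sg i ` e \<in> Eset n k" "\<Sum>(sg i ` e) < \<Sum>e"
  using DD_cases[OF assms(1)] assms(2) by blast

lemma one_no_desc: "\<not> desc n (one_seq k) i"
  by (auto simp: desc_def one_seq_def)

lemma DD_one': "DD n k (one_seq k) = basis (one_seq k)"
  using DD_one one_no_desc by blast

lemma DD_diag: "e \<in> Eset n k \<Longrightarrow> DD n k e e = 1"
proof (induction "\<Sum>e" arbitrary: e rule: less_induct)
  case less
  show ?case
  proof (cases "e = one_seq k")
    case True
    then show ?thesis using DD_one' by (simp add: basis_def)
  next
    case False
    then obtain i where i: "1 \<le> i" "i < n" "i \<notin> e" "Suc i \<in> e" "DD n k e = U i (DD n k (sg i ` e))"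
      "sg i ` e \<in> Eset n k" "\<Sum>(sg i ` e) < \<Sum>e" using DD_step_obtain[OF less.prems] by blast
    have "DD n k (sg i ` e) e = 0"
      using DD_tri[OF i(6), of e] i(7) by (metis less_asym sg_sg_img)
    moreover have "DD n k (sg i ` e) (sg i ` e) = 1" using less.hyps[OF i(7) i(6)] .
    ultimately show ?thesis using i(3,4,5) by (simp add: U_eq)
  qed
qed

definition ip :: "int poly \<Rightarrow> Qv" where "ip p = to_fract (map_poly of_int p)"

definition Zv :: "nat \<Rightarrow> Qv set" where "Zv d = {x. \<exists>p. x = vv ^ d * ip p}"

lemma mpi_add: "map_poly (of_int :: int \<Rightarrow> rat) (p + q) = map_poly of_int p + map_poly of_int q"
  by (rule poly_eqI) (simp add: coeff_map_poly)
lemma mpi_diff: "map_poly (of_int :: int \<Rightarrow> rat) (p - q) = map_poly of_int p - map_poly of_int q"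
  by (rule poly_eqI) (simp add: coeff_map_poly)
lemma mpi_uminus: "map_poly (of_int :: int \<Rightarrow> rat) (- p) = - map_poly of_int p"
  by (rule poly_eqI) (simp add: coeff_map_poly)

lemma ip_simps[simp]: "ip 0 = 0" "ip (p + q) = ip p + ip q" "ip (- p) = - ip p"
  by (simp_all add: ip_def mpi_add mpi_uminus)
lemma ip_one: "ip 1 = 1"
proof -
  have "map_poly (of_int :: int \<Rightarrow> rat) 1 = 1" by (rule poly_eqI) (simp add: coeff_map_poly)
  then show ?thesis by (simp add: ip_def)
qed

lemma ip_pCons0: "ip (pCons 0 p) = vv * ip p"
proof -
  have "map_poly (of_int :: int \<Rightarrow> rat) (pCons 0 p) = pCons 0 (map_poly of_int p)"
    by (simp add: map_poly_pCons)
  also have "\<dots> = [:0,1:] * map_poly of_int p" by simp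
  finally show ?thesis unfolding ip_def vv_def by (metis to_fract_mult)
qed

lemma Zv_0[simp]: "0 \<in> Zv d" unfolding Zv_def by (rule CollectI, rule exI[of _ 0]) simp
lemma Zv_1: "1 \<in> Zv 0" unfolding Zv_def by (rule CollectI, rule exI[of _ 1]) (simp add: ip_one)
lemma Zv_add: assumes "x \<in> Zv d" "y \<in> Zv d" shows "x + y \<in> Zv d"
proof -
  obtain p q where "x = vv ^ d * ip p" "y = vv ^ d * ip q" using assms unfolding Zv_def by blast
  then have "x + y = vv ^ d * ip (p + q)" by (simp add: distrib_left)
  then show ?thesis unfolding Zv_def by blast
qed
lemma Zv_uminus: assumes "x \<in> Zv d" shows "- x \<in> Zv d"
proof -
  obtain p where "x = vv ^ d * ip p" using assms unfolding Zv_def by blast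
  then have "- x = vv ^ d * ip (- p)" by simp
  then show ?thesis unfolding Zv_def by blast
qed
lemma Zv_diff: "x \<in> Zv d \<Longrightarrow> y \<in> Zv d \<Longrightarrow> x - y \<in> Zv d"
  using Zv_add[of x d "-y"] Zv_uminus by simp
lemma Zv_vv: assumes "x \<in> Zv d" shows "vv * x \<in> Zv (Suc d)"
proof -
  obtain p where "x = vv ^ d * ip p" using assms unfolding Zv_def by blast
  then have "vv * x = vv ^ Suc d * ip p" by simp
  then show ?thesis unfolding Zv_def by blast
qed
lemma Zv_ivv: assumes "x \<in> Zv (Suc d)" shows "inverse vv * x \<in> Zv d"
proof -
  obtain p where "x = vv ^ Suc d * ip p" using assms unfolding Zv_def by blast
  then have "inverse vv * x = vv ^ d * ip p" by simp
  then show ?thesis unfolding Zv_def by blast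
qed
lemma Zv_Suc: assumes "x \<in> Zv (Suc d)" shows "x \<in> Zv d"
proof -
  obtain p where "x = vv ^ Suc d * ip p" using assms unfolding Zv_def by blast
  then have "x = vv ^ d * ip (pCons 0 p)" by (simp add: ip_pCons0)
  then show ?thesis unfolding Zv_def by blast
qed
lemma Zv_mono: "d \<le> d' \<Longrightarrow> x \<in> Zv d' \<Longrightarrow> x \<in> Zv d"
  by (induction d' rule: dec_induct) (auto dest: Zv_Suc)
lemma Zv1_vZv: assumes "x \<in> Zv (Suc 0)" shows "x \<in> vZv"
proof -
  obtain p where "x = vv ^ Suc 0 * ip p" using assms unfolding Zv_def by blast
  then have "x = ip (pCons 0 p)" using ip_pCons0[of p] by simp
  then have "x = to_fract (map_poly of_int (pCons 0 p))" by (simp add: ip_def)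
  moreover have "coeff (pCons 0 p) 0 = 0" by simp
  ultimately show ?thesis unfolding vZv_def by blast
qed
lemma vZv_0: "0 \<in> vZv"
  unfolding vZv_def by (rule CollectI, rule exI[of _ 0]) simp
lemma vZv_diff: assumes "x \<in> vZv" "y \<in> vZv" shows "x - y \<in> vZv"
proof -
  obtain p q :: "int poly" where "x = to_fract (map_poly of_int p)" "coeff p 0 = 0"
    "y = to_fract (map_poly of_int q)" "coeff q 0 = 0" using assms unfolding vZv_def by blast
  then have "x - y = to_fract (map_poly of_int (p - q))" "coeff (p - q) 0 = 0"
    by (simp_all add: mpi_diff)
  then show ?thesis unfolding vZv_def by blast
qed

lemma card_diff_sg: "card (sg i ` f - sg i ` e) = card (f - e)"
  by (simp add: image_set_diff[OF inj_sg, symmetric] card_image inj_on_subset[OF inj_sg])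

lemma DD_deg: "e \<in> Eset n k \<Longrightarrow> f \<in> Eset n k \<Longrightarrow> DD n k e f \<in> Zv (card (f - e))"
proof (induction "\<Sum>e" arbitrary: e f rule: less_induct)
  case less
  show ?case
  proof (cases "e = one_seq k")
    case True
    then show ?thesis using DD_one' Zv_1 by (simp add: basis_def)
  next
    case False
    then obtain i where i: "1 \<le> i" "i < n" "i \<notin> e" "Suc i \<in> e" "DD n k e = U i (DD n k (sg i ` e))"
      "sg i ` e \<in> Eset n k" "\<Sum>(sg i ` e) < \<Sum>e" using DD_step_obtain[OF less.prems(1)] by blast
    let ?e = "sg i ` e"
    let ?x = "DD n k ?e"
    have ff: "finite f" using E_fin_el[OF less.prems(2)] .
    have fE': "sg i ` f \<in> Eset n k" using E_sg[OF less.prems(2) i(1,2)] .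
    have si: "sg i i = Suc i" "sg i (Suc i) = i" by (simp_all add: sg_apply)
    have h1: "?x (sg i ` f) \<in> Zv (card (f - e))"
    proof -
      have "?x (sg i ` f) \<in> Zv (card (sg i ` f - ?e))" by (rule less.hyps[OF i(7) i(6) fE'])
      then show ?thesis by (simp only: card_diff_sg)
    qed
    consider "i \<in> f \<longleftrightarrow> Suc i \<in> f" | "i \<notin> f" "Suc i \<in> f" | "i \<in> f" "Suc i \<notin> f" by blast
    then show ?thesis
    proof cases
      case 1 then show ?thesis using i(5) by (simp add: U_eq)
    next
      case 2
      have "f - ?e = insert (Suc i) (f - e)"
      proof (rule set_eqI)
        fix x
        show "x \<in> f - ?e \<longleftrightarrow> x \<in> insert (Suc i) (f - e)"
          using 2 i(3,4) by (cases "x = i"; cases "x = Suc i"; simp add: sg_apply)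
      qed
      moreover have "Suc i \<notin> f - e" using i(4) by simp
      ultimately have c: "card (f - ?e) = Suc (card (f - e))" using ff by simp
      have "?x f \<in> Zv (Suc (card (f - e)))" using less.hyps[OF i(7) i(6) less.prems(2)] c by simp
      then have "inverse vv * ?x f \<in> Zv (card (f - e))" by (rule Zv_ivv)
      then show ?thesis using i(5) 2 h1 by (simp add: U_eq Zv_diff)
    next
      case 3
      have "f - e = insert i (f - ?e)"
      proof (rule set_eqI)
        fix x
        show "x \<in> f - e \<longleftrightarrow> x \<in> insert i (f - ?e)"
          using 3 i(3,4) by (cases "x = i"; cases "x = Suc i"; simp add: sg_apply)
      qed
      moreover have "i \<notin> f - ?e" using i(4) si by simp
      ultimately have c: "card (f - e) = Suc (card (f - ?e))" using ff by simp
      have "?x f \<in> Zv (card (f - ?e))" using less.hyps[OF i(7) i(6) less.prems(2)] by simp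
      then have "vv * ?x f \<in> Zv (card (f - e))" using c by (simp add: Zv_vv)
      then show ?thesis using i(5) 3 h1 by (simp add: U_eq Zv_diff)
    qed
  qed
qed

lemma DD_vZv: assumes "e \<in> Eset n k" "f \<in> Eset n k" shows "DD n k e f - basis e f \<in> vZv"
proof (cases "f = e")
  case True then show ?thesis using DD_diag[OF assms(1)] vZv_0 by (simp add: basis_def)
next
  case False
  have "card f = card e" using assms by (simp add: Eset_def)
  have "finite f" "finite e" using E_fin_el[OF assms(1)] E_fin_el[OF assms(2)] by auto
  have "f - e \<noteq> {}"
  proof
    assume "f - e = {}"
    then have "f \<subseteq> e" by blast
    then have "f = e" using card_subset_eq[OF \<open>finite e\<close>] \<open>card f = card e\<close> by blast
    then show False using False by simp
  qed
  then have "card (f - e) \<ge> 1" using \<open>finite f\<close> by (simp add: Suc_le_eq card_gt_0_iff)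
  then have "DD n k e f \<in> Zv (Suc 0)" using Zv_mono DD_deg[OF assms] by (metis One_nat_def)
  then show ?thesis using False Zv1_vZv by (simp add: basis_def)
qed

definition lin :: "nat \<Rightarrow> nat \<Rightarrow> (nat set \<Rightarrow> Qv) \<Rightarrow> modM" where
  "lin n k c = (\<lambda>f. \<Sum>g\<in>Eset n k. c g * DD n k g f)"

lemma sum_if_delta: "finite A \<Longrightarrow> (\<Sum>g\<in>A. (if g = e then 1 else 0) * (Y g :: Qv)) = (if e \<in> A then Y e else 0)"
proof -
  assume "finite A"
  have "(\<Sum>g\<in>A. (if g = e then 1 else 0) * Y g) = (\<Sum>g\<in>A. if g = e then Y g else 0)"
    by (rule sum.cong) auto
  then show ?thesis using \<open>finite A\<close> by (simp add: sum.delta')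
qed

lemma sum_if_delta2: "finite A \<Longrightarrow> (\<Sum>g\<in>A. (Y g :: Qv) * (if e = g then 1 else 0)) = (if e \<in> A then Y e else 0)"
proof -
  assume "finite A"
  have "(\<Sum>g\<in>A. Y g * (if e = g then 1 else 0)) = (\<Sum>g\<in>A. if g = e then Y g else 0)"
    by (rule sum.cong) auto
  then show ?thesis using \<open>finite A\<close> by (simp add: sum.delta')
qed

lemma lin_comb:
  assumes "finite G" "\<And>g. g \<in> G \<Longrightarrow> a g \<noteq> 0 \<Longrightarrow> X g = lin n k (c g)"
  shows "(\<lambda>f. \<Sum>g\<in>G. a g * X g f) = lin n k (\<lambda>h. \<Sum>g\<in>G. a g * c g h)"
proof (rule ext)
  fix f
  have "(\<Sum>g\<in>G. a g * X g f) = (\<Sum>g\<in>G. a g * lin n k (c g) f)"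
    by (rule sum.cong[OF refl]) (metis assms(2) mult_zero_left)
  also have "\<dots> = (\<Sum>g\<in>G. \<Sum>h\<in>Eset n k. a g * (c g h * DD n k h f))"
    by (simp add: lin_def sum_distrib_left)
  also have "\<dots> = (\<Sum>h\<in>Eset n k. \<Sum>g\<in>G. a g * (c g h * DD n k h f))"
    by (rule sum.swap)
  also have "\<dots> = lin n k (\<lambda>h. \<Sum>g\<in>G. a g * c g h) f"
    by (simp add: lin_def sum_distrib_right mult.assoc)
  finally show "(\<Sum>g\<in>G. a g * X g f) = lin n k (\<lambda>h. \<Sum>g\<in>G. a g * c g h) f" .
qed

lemma lin_delta: "e \<in> Eset n k \<Longrightarrow> lin n k (\<lambda>h. if h = e then 1 else 0) = DD n k e"
  by (rule ext) (simp add: lin_def sum_if_delta)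

lemma M_add: "x \<in> Mset n k \<Longrightarrow> y \<in> Mset n k \<Longrightarrow> (\<lambda>f. x f + y f) \<in> Mset n k"
  by (simp add: Mset_def)
lemma M_scal: "x \<in> Mset n k \<Longrightarrow> (\<lambda>f. c * x f) \<in> Mset n k"
  by (simp add: Mset_def)
lemma M_sum: "(\<And>g. g \<in> G \<Longrightarrow> X g \<in> Mset n k) \<Longrightarrow> (\<lambda>f. \<Sum>g\<in>G. a g * X g f) \<in> Mset n k"
  by (simp add: Mset_def)

lemma lin_M: "lin n k c \<in> Mset n k"
  unfolding lin_def by (rule M_sum) (rule DD_M)

lemma lin_cong: "(\<And>g. g \<in> Eset n k \<Longrightarrow> c g = d g) \<Longrightarrow> lin n k c = lin n k d"
  unfolding lin_def by (rule ext) (rule sum.cong, auto)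

lemma lin_lincomb: "lin n k (\<lambda>h. a h + b * c h) = (\<lambda>f. lin n k a f + b * lin n k c f)"
  by (rule ext) (simp add: lin_def algebra_simps sum.distrib sum_distrib_left)

lemma lin_diff: "lin n k (\<lambda>h. a h - c h) = (\<lambda>f. lin n k a f - lin n k c f)"
  using lin_lincomb[of n k a "-1" c] by simp

lemma basis_span: "e \<in> Eset n k \<Longrightarrow> \<exists>c. basis e = lin n k c"
proof (induction "\<Sum>e" arbitrary: e rule: less_induct)
  case less
  note eE = less.prems
  define a where "a g = (if g = e then 1 else - DD n k e g)" for g
  define X where "X g = (if g = e then DD n k e else basis g)" for g
  have eq: "basis e = (\<lambda>f. \<Sum>g\<in>Eset n k. a g * X g f)"
  proof (rule ext)
    fix f
    have "(\<Sum>g\<in>Eset n k. a g * X g f) = a e * X e f + (\<Sum>g\<in>Eset n k - {e}. a g * X g f)"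
      using eE by (simp add: sum.remove)
    also have "(\<Sum>g\<in>Eset n k - {e}. a g * X g f) = (\<Sum>g\<in>Eset n k - {e}. if g = f then - DD n k e f else 0)"
      by (rule sum.cong) (auto simp: a_def X_def basis_def)
    also have "\<dots> = (if f \<in> Eset n k - {e} then - DD n k e f else 0)"
      by (simp add: sum.delta')
    finally have s: "(\<Sum>g\<in>Eset n k. a g * X g f) = DD n k e f + (if f \<in> Eset n k - {e} then - DD n k e f else 0)"
      by (simp add: a_def X_def)
    show "basis e f = (\<Sum>g\<in>Eset n k. a g * X g f)"
    proof (cases "f \<in> Eset n k")
      case True then show ?thesis using s DD_diag[OF eE] by (auto simp: basis_def)
    next
      case False
      then have "DD n k e f = 0" using DD_M[OF eE] by (auto simp: Mset_def)
      then show ?thesis using s False eE by (auto simp: basis_def)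
    qed
  qed
  have "\<forall>g. \<exists>c. g \<in> Eset n k \<and> a g \<noteq> 0 \<longrightarrow> X g = lin n k c"
  proof
    fix g
    show "\<exists>c. g \<in> Eset n k \<and> a g \<noteq> 0 \<longrightarrow> X g = lin n k c"
    proof (cases "g = e")
      case True
      then show ?thesis using lin_delta[OF eE]
        by (intro exI[of _ "\<lambda>h. if h = e then 1 else 0"]) (simp add: X_def)
    next
      case False
      show ?thesis
      proof (cases "g \<in> Eset n k \<and> a g \<noteq> 0")
        case True
        then have "DD n k e g \<noteq> 0" using False by (simp add: a_def)
        then have "\<Sum>g < \<Sum>e" using DD_tri[OF eE] False by blast
        then show ?thesis using less.hyps True False by (auto simp: X_def)
      qed blast
    qed
  qed
  then obtain C where C: "\<And>g. g \<in> Eset n k \<Longrightarrow> a g \<noteq> 0 \<Longrightarrow> X g = lin n k (C g)"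
    by metis
  have "(\<lambda>f. \<Sum>g\<in>Eset n k. a g * X g f) = lin n k (\<lambda>h. \<Sum>g\<in>Eset n k. a g * C g h)"
    by (rule lin_comb[OF E_finite]) (rule C)
  then show ?case using eq by metis
qed

lemma span: assumes "m \<in> Mset n k" shows "\<exists>c. m = lin n k c"
proof -
  have "\<forall>g. \<exists>c. g \<in> Eset n k \<longrightarrow> basis g = lin n k c" using basis_span by blast
  then obtain C where C: "\<And>g. g \<in> Eset n k \<Longrightarrow> basis g = lin n k (C g)" by metis
  have "m = (\<lambda>f. \<Sum>g\<in>Eset n k. m g * basis g f)"
  proof (rule ext)
    fix f
    show "m f = (\<Sum>g\<in>Eset n k. m g * basis g f)"
      using assms by (simp add: basis_def Mset_def sum_if_delta2)
  qed
  also have "\<dots> = lin n k (\<lambda>h. \<Sum>g\<in>Eset n k. m g * C g h)"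
    by (rule lin_comb[OF E_finite]) (use C in auto)
  finally show ?thesis by blast
qed

lemma max_sum_exists:
  assumes "finite S" "S \<noteq> {}" shows "\<exists>g\<in>S. \<forall>h\<in>S. \<Sum>h \<le> (\<Sum>g::nat)"
proof -
  have "Max ((\<lambda>g. \<Sum>g) ` S) \<in> (\<lambda>g. \<Sum>g) ` S" using assms by simp
  then obtain g where g: "g \<in> S" "\<Sum>g = Max ((\<lambda>g. \<Sum>g) ` S)" by auto
  have "\<forall>h\<in>S. \<Sum>h \<le> (\<Sum>g::nat)" using g assms by simp
  then show ?thesis using g by blast
qed

lemma lin_top:
  assumes "g \<in> Eset n k" "\<And>h. h \<in> Eset n k \<Longrightarrow> c h \<noteq> 0 \<Longrightarrow> \<Sum>h \<le> \<Sum>g"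
  shows "lin n k c g = c g"
proof -
  have "lin n k c g = c g * DD n k g g + (\<Sum>h\<in>Eset n k - {g}. c h * DD n k h g)"
    using assms(1) by (simp add: lin_def sum.remove)
  also have "(\<Sum>h\<in>Eset n k - {g}. c h * DD n k h g) = 0"
  proof (rule sum.neutral, rule ballI)
    fix h assume h: "h \<in> Eset n k - {g}"
    show "c h * DD n k h g = 0"
    proof (rule ccontr)
      assume "c h * DD n k h g \<noteq> 0"
      then have "c h \<noteq> 0" "DD n k h g \<noteq> 0" by auto
      then have "\<Sum>h \<le> \<Sum>g" "\<Sum>g < \<Sum>h" using assms(2) DD_tri h by fastforce+
      then show False by simp
    qed
  qed
  finally show ?thesis using DD_diag[OF assms(1)] by simp
qed

lemma lin_indep: assumes "lin n k c = (\<lambda>f. 0)" "g \<in> Eset n k" shows "c g = 0"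
proof (rule ccontr)
  assume "c g \<noteq> 0"
  let ?S = "{h \<in> Eset n k. c h \<noteq> 0}"
  have "finite ?S" "?S \<noteq> {}" using assms \<open>c g \<noteq> 0\<close> by auto
  then obtain h where h: "h \<in> ?S" "\<forall>h'\<in>?S. \<Sum>h' \<le> \<Sum>h" using max_sum_exists by blast
  have "lin n k c h = c h" by (rule lin_top) (use h in auto)
  then show False using assms(1) h by (metis (mono_tags, lifting) mem_Collect_eq)
qed

lemma lin_unique:
  assumes "lin n k c = lin n k d" "g \<in> Eset n k" shows "c g = d g"
proof -
  have "lin n k (\<lambda>h. c h - d h) = (\<lambda>f. 0)" using assms(1) by (simp add: lin_diff)
  from lin_indep[OF this assms(2)] show ?thesis by simp
qed

lemma U_lin: "U i (\<lambda>f. \<Sum>g\<in>G. a g * X g f) = (\<lambda>f. \<Sum>g\<in>G. a g * U i (X g) f)"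
  by (rule ext) (simp add: U_eq sum_subtractf sum_distrib_left algebra_simps)

lemma U_linc: "U i (lin n k c) = (\<lambda>f. \<Sum>g\<in>Eset n k. c g * U i (DD n k g) f)"
  unfolding lin_def by (rule U_lin)

lemma lin_single: "e \<in> Eset n k \<Longrightarrow> lin n k (\<lambda>h. if h = e then c else 0) = (\<lambda>f. c * DD n k e f)"
proof (rule ext)
  fix f assume e: "e \<in> Eset n k"
  have "lin n k (\<lambda>h. if h = e then c else 0) f = (\<Sum>g\<in>Eset n k. if g = e then c * DD n k e f else 0)"
    unfolding lin_def by (rule sum.cong) auto
  then show "lin n k (\<lambda>h. if h = e then c else 0) f = c * DD n k e f" using e by (simp add: sum.delta')
qed

definition goodU :: "nat \<Rightarrow> nat \<Rightarrow> nat set \<Rightarrow> nat \<Rightarrow> (nat set \<Rightarrow> Qv) \<Rightarrow> bool" where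
  "goodU n k e i r \<longleftrightarrow> U i (DD n k e) = lin n k r \<and> (\<forall>g. barQ (r g) = r g) \<and>
     (\<forall>g\<in>Eset n k. r g \<noteq> 0 \<longrightarrow> \<Sum>g \<le> \<Sum>e + 1) \<and>
     ((i \<in> e \<longleftrightarrow> Suc i \<in> e) \<longrightarrow> (\<forall>g\<in>Eset n k. r g \<noteq> 0 \<longrightarrow> \<Sum>g < \<Sum>e))"

lemma goodU_single:
  assumes "e' \<in> Eset n k" "U i (DD n k e) = DD n k e'" "\<Sum>e' \<le> \<Sum>e + 1"
    "(i \<in> e \<longleftrightarrow> Suc i \<in> e) \<Longrightarrow> \<Sum>e' < \<Sum>e"
  shows "goodU n k e i (\<lambda>h. if h = e' then 1 else 0)"
  unfolding goodU_def using assms lin_delta[OF assms(1)] by auto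

lemma S2: "e \<in> Eset n k \<Longrightarrow> 1 \<le> i \<Longrightarrow> i < n \<Longrightarrow> \<exists>r. goodU n k e i r"
proof (induction "\<Sum>e" arbitrary: e i rule: less_induct)
  case less
  note eE = less.prems(1) and i1 = less.prems(2) and i2 = less.prems(3)
  have fe: "finite e" using E_fin_el[OF eE] .
  consider "i \<notin> e" "Suc i \<in> e" | "i \<in> e" "Suc i \<notin> e" | "i \<in> e \<longleftrightarrow> Suc i \<in> e" by blast
  then show ?case
  proof cases
    case 1
    have d: "desc n e i" using 1 i1 i2 by (simp add: desc_def)
    define c where "c = - (vv + inverse vv)"
    have "U i (DD n k e) = U i (U i (DD n k (sg i ` e)))" using P3[OF eE d] by simp
    also have "\<dots> = (\<lambda>f. c * U i (DD n k (sg i ` e)) f)" by (simp add: O2 c_def)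
    also have "\<dots> = (\<lambda>f. c * DD n k e f)" using P3[OF eE d] by simp
    also have "\<dots> = lin n k (\<lambda>h. if h = e then c else 0)" using lin_single[OF eE] by simp
    finally have "goodU n k e i (\<lambda>h. if h = e then c else 0)"
      unfolding goodU_def using 1 by (auto simp: c_def add.commute)
    then show ?thesis by blast
  next
    case 2
    let ?e = "sg i ` e"
    have e'E: "?e \<in> Eset n k" using E_sg[OF eE i1 i2] .
    have si: "sg i i = Suc i" "sg i (Suc i) = i" by (simp_all add: sg_apply)
    have d: "desc n ?e i" using 2 i1 i2 si by (simp add: desc_def)
    have "DD n k ?e = U i (DD n k e)" using P3[OF e'E d] by simp
    moreover have "\<Sum>?e = \<Sum>e + 1" using sum_sg_gen[OF fe 2] .
    ultimately have "goodU n k e i (\<lambda>h. if h = ?e then 1 else 0)"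
      by (intro goodU_single[OF e'E]) (use 2 in auto)
    then show ?thesis by blast
  next
    case 3
    show ?thesis
    proof (cases "e = one_seq k")
      case True
      have "U i (DD n k e) = (\<lambda>f. 0)"
      proof (rule ext)
        fix f
        have "basis e (sg i ` f) = 0" if "(i \<in> f) \<noteq> (Suc i \<in> f)"
        proof -
          have "sg i ` f \<noteq> e" using that 3 by (auto simp: sg_apply)
          then show ?thesis by (simp add: basis_def)
        qed
        moreover have "basis e f = 0" if "(i \<in> f) \<noteq> (Suc i \<in> f)"
          using that 3 by (auto simp: basis_def)
        ultimately show "U i (DD n k e) f = 0" using True DD_one' by (simp add: U_eq)
      qed
      then have "goodU n k e i (\<lambda>h. 0)" unfolding goodU_def lin_def by simp
      then show ?thesis by blast
    next
      case False
      then obtain j where j: "1 \<le> j" "j < n" "j \<notin> e" "Suc j \<in> e" "DD n k e = U j (DD n k (sg j ` e))"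
        "sg j ` e \<in> Eset n k" "\<Sum>(sg j ` e) < \<Sum>e" using DD_step_obtain[OF eE] by blast
      let ?e = "sg j ` e"
      have "j \<noteq> i" using j 3 by auto
      consider "j = Suc i" | "Suc j = i" | "Suc i < j \<or> Suc j < i" using \<open>j \<noteq> i\<close> by linarith
      then show ?thesis
      proof cases
        case 1
        have sd: "sg (Suc i) i = i" "sg (Suc i) (Suc i) = Suc (Suc i)" by (simp_all add: sg_apply)
        have d: "desc n ?e i" using 1 j 3 i1 i2 sd by (simp add: desc_def)
        have "U i (DD n k e) = U i (U (Suc i) (U i (DD n k (sg i ` ?e))))"
          using j(5) P3[OF j(6) d] 1 by simp
        also have "\<dots> = DD n k ?e" using P3[OF j(6) d] by (simp add: O3a)
        finally have "goodU n k e i (\<lambda>h. if h = ?e then 1 else 0)"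
          using goodU_single[OF j(6)] j(7) by simp
        then show ?thesis by blast
      next
        case 2
        have sd: "sg j (Suc j) = j" "sg j (Suc (Suc j)) = Suc (Suc j)" by (simp_all add: sg_apply)
        have d: "desc n ?e i" using 2 j 3 i1 i2 sd by (auto simp: desc_def)
        have "U i (DD n k e) = U (Suc j) (U j (U (Suc j) (DD n k (sg i ` ?e))))"
          using j(5) P3[OF j(6) d] 2 by simp
        also have "\<dots> = U (Suc j) (DD n k (sg i ` ?e))" by (rule O3b)
        also have "\<dots> = DD n k ?e" using P3[OF j(6) d] 2 by simp
        finally have "goodU n k e i (\<lambda>h. if h = ?e then 1 else 0)"
          using goodU_single[OF j(6)] j(7) by simp
        then show ?thesis by blast
      next
        case far: 3
        have sd: "sg j i = i" "sg j (Suc i) = Suc i" using far by (auto simp: sg_apply)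
        have same': "i \<in> ?e \<longleftrightarrow> Suc i \<in> ?e" using 3 sd by simp
        obtain r1 where r1: "goodU n k ?e i r1" using less.hyps[OF j(7) j(6) i1 i2] by blast
        have r1a: "U i (DD n k ?e) = lin n k r1" and r1b: "\<And>g. barQ (r1 g) = r1 g"
          and r1c: "\<And>g. g \<in> Eset n k \<Longrightarrow> r1 g \<noteq> 0 \<Longrightarrow> \<Sum>g < \<Sum>?e"
          using r1 same' unfolding goodU_def by auto
        have "\<forall>g. \<exists>R. g \<in> Eset n k \<and> r1 g \<noteq> 0 \<longrightarrow> goodU n k g j R"
        proof
          fix g
          show "\<exists>R. g \<in> Eset n k \<and> r1 g \<noteq> 0 \<longrightarrow> goodU n k g j R"
          proof (cases "g \<in> Eset n k \<and> r1 g \<noteq> 0")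
            case True
            then have "\<Sum>g < \<Sum>e" using r1c j(7) by fastforce
            then show ?thesis using less.hyps[OF _ _ j(1) j(2), of g] True by blast
          qed blast
        qed
        then obtain R where R: "\<And>g. g \<in> Eset n k \<Longrightarrow> r1 g \<noteq> 0 \<Longrightarrow> goodU n k g j (R g)" by metis
        have Ra: "\<And>g. g \<in> Eset n k \<Longrightarrow> r1 g \<noteq> 0 \<Longrightarrow> U j (DD n k g) = lin n k (R g)"
          and Rb: "\<And>g h. g \<in> Eset n k \<Longrightarrow> r1 g \<noteq> 0 \<Longrightarrow> barQ (R g h) = R g h"
          and Rc: "\<And>g h. g \<in> Eset n k \<Longrightarrow> r1 g \<noteq> 0 \<Longrightarrow> h \<in> Eset n k \<Longrightarrow> R g h \<noteq> 0 \<Longrightarrow> \<Sum>h \<le> \<Sum>g + 1"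
          using R unfolding goodU_def by auto
        define r where "r h = (\<Sum>g\<in>Eset n k. r1 g * R g h)" for h
        have "U i (DD n k e) = U j (U i (DD n k ?e))" using j(5) O1[OF far] by simp
        also have "\<dots> = (\<lambda>f. \<Sum>g\<in>Eset n k. r1 g * U j (DD n k g) f)" using r1a U_linc by simp
        also have "\<dots> = lin n k r" unfolding r_def by (rule lin_comb[OF E_finite Ra])
        finally have ra: "U i (DD n k e) = lin n k r" .
        have rb: "barQ (r h) = r h" for h
        proof -
          have "barQ (r h) = (\<Sum>g\<in>Eset n k. barQ (r1 g) * barQ (R g h))"
            by (simp add: r_def barQ_sum)
          also have "\<dots> = r h" unfolding r_def
            by (rule sum.cong[OF refl]) (metis Rb r1b barQ_0 mult_zero_left)
          finally show ?thesis .
        qed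
        have rc: "\<Sum>h < \<Sum>e" if hE: "h \<in> Eset n k" and rh: "r h \<noteq> 0" for h
        proof -
          obtain g where g: "g \<in> Eset n k" "r1 g * R g h \<noteq> 0" using rh unfolding r_def
            by (meson sum.neutral)
          then have "r1 g \<noteq> 0" "R g h \<noteq> 0" by auto
          then have "\<Sum>h \<le> \<Sum>g + 1" "\<Sum>g < \<Sum>?e" using Rc r1c g hE by auto
          then show ?thesis using j(7) by linarith
        qed
        have "goodU n k e i r" unfolding goodU_def using ra rb rc by fastforce
        then show ?thesis by blast
      qed
    qed
  qed
qed

definition coord :: "nat \<Rightarrow> nat \<Rightarrow> modM \<Rightarrow> nat set \<Rightarrow> Qv" where
  "coord n k m = (THE c. (\<forall>g. g \<notin> Eset n k \<longrightarrow> c g = 0) \<and> lin n k c = restrM n k m)"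

definition ourb :: "nat \<Rightarrow> nat \<Rightarrow> modM \<Rightarrow> modM" where
  "ourb n k m = lin n k (\<lambda>g. barQ (coord n k m g))"

lemma restrM_M: "m \<in> Mset n k \<Longrightarrow> restrM n k m = m"
  by (rule ext) (auto simp: restrM_def Mset_def)

lemma restrM_in: "restrM n k m \<in> Mset n k"
  by (auto simp: restrM_def Mset_def)

lemma restrM_idem: "restrM n k (restrM n k m) = restrM n k m"
  by (rule restrM_M[OF restrM_in])

lemma coord_uniq:
  assumes "\<forall>g. g \<notin> Eset n k \<longrightarrow> c g = 0" "\<forall>g. g \<notin> Eset n k \<longrightarrow> d g = 0" "lin n k c = lin n k d"
  shows "c = d"
proof (rule ext)
  fix g show "c g = d g" using assms lin_unique[OF assms(3)] by (cases "g \<in> Eset n k") auto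
qed

lemma coord_ex: assumes "m \<in> Mset n k"
  shows "\<exists>c. (\<forall>g. g \<notin> Eset n k \<longrightarrow> c g = 0) \<and> lin n k c = m"
proof -
  obtain c where c: "m = lin n k c" using span[OF assms] by blast
  let ?c = "\<lambda>g. if g \<in> Eset n k then c g else 0"
  have "lin n k ?c = lin n k c" by (rule lin_cong) simp
  then show ?thesis using c by (intro exI[of _ ?c]) auto
qed

lemma coord_prop: "(\<forall>g. g \<notin> Eset n k \<longrightarrow> coord n k m g = 0) \<and> lin n k (coord n k m) = restrM n k m"
proof -
  have "\<exists>!c. (\<forall>g. g \<notin> Eset n k \<longrightarrow> c g = 0) \<and> lin n k c = restrM n k m"
    using coord_ex[OF restrM_in] coord_uniq by metis
  then show ?thesis unfolding coord_def by (rule theI')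
qed

lemma lin_coord: "m \<in> Mset n k \<Longrightarrow> lin n k (coord n k m) = m"
  using coord_prop restrM_M by metis

lemma coord_lin: "coord n k (lin n k d) = (\<lambda>g. if g \<in> Eset n k then d g else 0)"
proof (rule coord_uniq)
  show "\<forall>g. g \<notin> Eset n k \<longrightarrow> coord n k (lin n k d) g = 0" using coord_prop by blast
  show "\<forall>g. g \<notin> Eset n k \<longrightarrow> (if g \<in> Eset n k then d g else 0) = 0" by simp
  have "lin n k (\<lambda>g. if g \<in> Eset n k then d g else 0) = lin n k d" by (rule lin_cong) simp
  then show "lin n k (coord n k (lin n k d)) = lin n k (\<lambda>g. if g \<in> Eset n k then d g else 0)"
    using lin_coord[OF lin_M] by simp
qed

lemma ourb_lin: "ourb n k (lin n k d) = lin n k (\<lambda>g. barQ (d g))"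
  unfolding ourb_def coord_lin by (rule lin_cong) simp

lemma ourb_M: "m \<in> Mset n k \<Longrightarrow> ourb n k m = lin n k (\<lambda>g. barQ (coord n k m g))"
  by (simp add: ourb_def)

lemma lin_scal: "lin n k (\<lambda>h. c * d h) = (\<lambda>f. c * lin n k d f)"
  by (rule ext) (simp add: lin_def sum_distrib_left mult.assoc)

lemma lin_add: "lin n k (\<lambda>h. a h + d h) = (\<lambda>f. lin n k a f + lin n k d f)"
  using lin_lincomb[of n k a 1 d] by simp

lemma ourb_DD: "e \<in> Eset n k \<Longrightarrow> ourb n k (DD n k e) = DD n k e"
proof -
  assume e: "e \<in> Eset n k"
  have "ourb n k (DD n k e) = lin n k (\<lambda>g. barQ (if g = e then 1 else 0))"
    using lin_delta[OF e] ourb_lin by metis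
  also have "(\<lambda>g. barQ (if g = e then 1 else 0)) = (\<lambda>g. if g = e then 1 else 0)" by (rule ext) simp
  finally show ?thesis using lin_delta[OF e] by simp
qed

lemma ourb_U: assumes "m \<in> Mset n k" "1 \<le> i" "i < n"
  shows "\<exists>d. U i m = lin n k d \<and> lin n k (\<lambda>g. barQ (d g)) = U i (ourb n k m)"
proof -
  let ?c = "coord n k m"
  have m: "m = lin n k ?c" using lin_coord[OF assms(1)] by simp
  have "\<forall>g. \<exists>R. g \<in> Eset n k \<longrightarrow> goodU n k g i R" using S2 assms(2,3) by blast
  then obtain R where R: "\<And>g. g \<in> Eset n k \<Longrightarrow> goodU n k g i (R g)" by metis
  have Ra: "\<And>g. g \<in> Eset n k \<Longrightarrow> U i (DD n k g) = lin n k (R g)"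
    and Rb: "\<And>g h. g \<in> Eset n k \<Longrightarrow> barQ (R g h) = R g h" using R unfolding goodU_def by auto
  define d where "d h = (\<Sum>g\<in>Eset n k. ?c g * R g h)" for h
  have "U i m = (\<lambda>f. \<Sum>g\<in>Eset n k. ?c g * U i (DD n k g) f)" using m U_linc by metis
  also have "\<dots> = lin n k d" unfolding d_def by (rule lin_comb[OF E_finite Ra])
  finally have 1: "U i m = lin n k d" .
  have "(\<lambda>g. barQ (d g)) = (\<lambda>h. \<Sum>g\<in>Eset n k. barQ (?c g) * R g h)"
    by (rule ext) (simp add: d_def barQ_sum Rb)
  then have "lin n k (\<lambda>g. barQ (d g)) = lin n k (\<lambda>h. \<Sum>g\<in>Eset n k. barQ (?c g) * R g h)" by simp
  also have "\<dots> = (\<lambda>f. \<Sum>g\<in>Eset n k. barQ (?c g) * U i (DD n k g) f)"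
    by (rule lin_comb[OF E_finite Ra, symmetric])
  also have "\<dots> = U i (ourb n k m)" unfolding ourb_def U_linc ..
  finally show ?thesis using 1 by blast
qed

lemma ourb_is_barM: assumes "k \<le> n" shows "is_barM n k (ourb n k)"
  unfolding is_barM_def
proof (intro conjI ballI allI)
  fix m
  show "ourb n k m = ourb n k (restrM n k m)" unfolding ourb_def coord_def restrM_idem ..
next
  fix m assume "m \<in> Mset n k" show "ourb n k m \<in> Mset n k" unfolding ourb_def by (rule lin_M)
next
  fix m1 m2 assume m: "m1 \<in> Mset n k" "m2 \<in> Mset n k"
  have "(\<lambda>e. m1 e + m2 e) = lin n k (\<lambda>h. coord n k m1 h + coord n k m2 h)"
    using lin_coord[OF m(1)] lin_coord[OF m(2)] lin_add by metis
  then have "ourb n k (\<lambda>e. m1 e + m2 e) = lin n k (\<lambda>h. barQ (coord n k m1 h) + barQ (coord n k m2 h))"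
    using ourb_lin by simp
  then show "ourb n k (\<lambda>e. m1 e + m2 e) = (\<lambda>e. ourb n k m1 e + ourb n k m2 e)"
    by (simp add: lin_add ourb_def)
next
  fix c m assume m: "m \<in> Mset n k"
  have "(\<lambda>e. c * m e) = lin n k (\<lambda>h. c * coord n k m h)"
    using lin_coord[OF m] lin_scal by metis
  then have "ourb n k (\<lambda>e. c * m e) = lin n k (\<lambda>h. barQ c * barQ (coord n k m h))"
    using ourb_lin by simp
  then show "ourb n k (\<lambda>e. c * m e) = (\<lambda>e. barQ c * ourb n k m e)"
    by (simp add: lin_scal ourb_def)
next
  have "one_seq k \<in> Eset n k" using one_E[OF assms] .
  then show "ourb n k (basis (one_seq k)) = basis (one_seq k)" using ourb_DD DD_one' by metis
next
  fix i m assume i: "i \<in> {1..<n}" and m: "m \<in> Mset n k"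
  obtain d where d: "U i m = lin n k d" "lin n k (\<lambda>g. barQ (d g)) = U i (ourb n k m)"
    using ourb_U[OF m] i by auto
  have "Tact i m = (\<lambda>f. U i m f + vv * m f)" by (rule ext) (simp add: U_def)
  also have "\<dots> = lin n k (\<lambda>h. d h + vv * coord n k m h)"
    using d(1) lin_coord[OF m] lin_lincomb by metis
  finally have "ourb n k (Tact i m) = lin n k (\<lambda>h. barQ (d h) + inverse vv * barQ (coord n k m h))"
    using ourb_lin by simp
  also have "\<dots> = (\<lambda>f. U i (ourb n k m) f + inverse vv * ourb n k m f)"
    using d(2) lin_lincomb ourb_def by metis
  finally show "Tact i (ourb n k (Tact i m)) = ourb n k m" using O4 by simp
qed

lemma M_Tact: "x \<in> Mset n k \<Longrightarrow> 1 \<le> i \<Longrightarrow> i < n \<Longrightarrow> Tact i x \<in> Mset n k"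
proof -
  assume a: "x \<in> Mset n k" "1 \<le> i" "i < n"
  have "Tact i x = (\<lambda>f. U i x f + vv * x f)" by (rule ext) (simp add: U_def)
  then show ?thesis using M_add[OF U_M[OF a] M_scal[OF a(1)]] by simp
qed

lemma barM_unique:
  assumes b: "is_barM n k b" shows "b = ourb n k"
proof -
  have b1: "\<And>m. b m = b (restrM n k m)"
    and b2: "\<And>m. m \<in> Mset n k \<Longrightarrow> b m \<in> Mset n k"
    and b3: "\<And>m1 m2. m1 \<in> Mset n k \<Longrightarrow> m2 \<in> Mset n k \<Longrightarrow> b (\<lambda>e. m1 e + m2 e) = (\<lambda>e. b m1 e + b m2 e)"
    and b4: "\<And>c m. m \<in> Mset n k \<Longrightarrow> b (\<lambda>e. c * m e) = (\<lambda>e. barQ c * b m e)"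
    and b5: "b (basis (one_seq k)) = basis (one_seq k)"
    and b6: "\<And>i m. i \<in> {1..<n} \<Longrightarrow> m \<in> Mset n k \<Longrightarrow> Tact i (b (Tact i m)) = b m"
    using b unfolding is_barM_def by blast+
  have z: "(\<lambda>e. 0::Qv) \<in> Mset n k" by (simp add: Mset_def)
  have b0: "b (\<lambda>e. 0) = (\<lambda>e. 0)"
  proof -
    have "b (\<lambda>e. 0 + 0) = (\<lambda>e. b (\<lambda>e. 0) e + b (\<lambda>e. 0) e)" using b3[OF z z] .
    then have "\<And>e. b (\<lambda>e. 0) e = b (\<lambda>e. 0) e + b (\<lambda>e. 0) e" by (metis add_0)
    then show ?thesis by (intro ext) (metis add_cancel_left_right)
  qed
  have bU: "b (U i x) = U i (b x)" if x: "x \<in> Mset n k" and i: "1 \<le> i" "i < n" for i x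
  proof -
    have TM: "Tact i x \<in> Mset n k" using M_Tact[OF x i] .
    have eqU: "U i x = (\<lambda>f. Tact i x f + (- vv) * x f)" by (rule ext) (simp add: U_def)
    have s1: "b (\<lambda>f. Tact i x f + (- vv) * x f) = (\<lambda>f. b (Tact i x) f + b (\<lambda>e. (- vv) * x e) f)"
      by (rule b3[OF TM M_scal[OF x]])
    have s2: "b (\<lambda>e. (- vv) * x e) = (\<lambda>e. barQ (- vv) * b x e)" by (rule b4[OF x])
    have "b (U i x) = (\<lambda>f. b (Tact i x) f + (- inverse vv) * b x f)"
      unfolding eqU s1 s2 by simp
    moreover have "b (Tact i x) = (\<lambda>f. U i (b x) f + inverse vv * b x f)"
      using O5[of i "b (Tact i x)"] b6[of i x] i x by simp
    ultimately show ?thesis by (simp add: algebra_simps)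
  qed
  have bDD: "b (DD n k e) = DD n k e" if "e \<in> Eset n k" for e
    using that
  proof (induction "\<Sum>e" arbitrary: e rule: less_induct)
    case less
    show ?case
    proof (cases "e = one_seq k")
      case True then show ?thesis using b5 DD_one' by simp
    next
      case False
      then obtain i where i: "1 \<le> i" "i < n" "DD n k e = U i (DD n k (sg i ` e))"
        "sg i ` e \<in> Eset n k" "\<Sum>(sg i ` e) < \<Sum>e" using DD_step_obtain[OF less.prems] by metis
      show ?thesis using bU[OF DD_M[OF i(4)] i(1,2)] less.hyps[OF i(5) i(4)] i(3) by simp
    qed
  qed
  have bsum: "b (\<lambda>f. \<Sum>g\<in>G. c g * DD n k g f) = (\<lambda>f. \<Sum>g\<in>G. barQ (c g) * DD n k g f)"
    if "G \<subseteq> Eset n k" for G c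
  proof -
    have "finite G" using that finite_subset E_finite by blast
    then show ?thesis using that
    proof (induction G rule: finite_induct)
      case empty then show ?case using b0 by simp
    next
      case (insert g G)
      have gE: "g \<in> Eset n k" and GE: "G \<subseteq> Eset n k" using insert.prems by auto
      have M1: "(\<lambda>f. c g * DD n k g f) \<in> Mset n k" using M_scal[OF DD_M[OF gE]] .
      have M2: "(\<lambda>f. \<Sum>g\<in>G. c g * DD n k g f) \<in> Mset n k"
        by (rule M_sum) (use DD_M GE in auto)
      have "(\<lambda>f. \<Sum>g\<in>insert g G. c g * DD n k g f) = (\<lambda>f. c g * DD n k g f + (\<Sum>g\<in>G. c g * DD n k g f))"
        using insert.hyps by simp
      then have "b (\<lambda>f. \<Sum>g\<in>insert g G. c g * DD n k g f) =
          (\<lambda>f. barQ (c g) * b (DD n k g) f + b (\<lambda>f. \<Sum>g\<in>G. c g * DD n k g f) f)"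
        using b3[OF M1 M2] b4[OF DD_M[OF gE]] by simp
      then show ?case using insert.IH[OF GE] bDD[OF gE] insert.hyps by simp
    qed
  qed
  show ?thesis
  proof (rule ext)
    fix m
    have "b m = b (restrM n k m)" using b1 .
    also have "\<dots> = b (lin n k (coord n k (restrM n k m)))" using lin_coord[OF restrM_in] by simp
    also have "\<dots> = lin n k (\<lambda>g. barQ (coord n k (restrM n k m) g))"
      unfolding lin_def by (rule bsum) simp
    also have "\<dots> = ourb n k (restrM n k m)" by (simp add: ourb_def)
    also have "\<dots> = ourb n k m" unfolding ourb_def coord_def restrM_idem ..
    finally show "b m = ourb n k m" .
  qed
qed

lemma barM_eq: "k \<le> n \<Longrightarrow> barM n k = ourb n k"
  unfolding barM_def using ourb_is_barM barM_unique by (metis the_equality)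

lemma parKL_eq:
  assumes kn: "k \<le> n" and e0: "w ` one_seq k \<in> Eset n k"
  shows "parKL n k w = DD n k (w ` one_seq k)"
  unfolding parKL_def
proof (rule the_equality)
  let ?e = "w ` one_seq k"
  show "DD n k ?e \<in> Mset n k \<and> barM n k (DD n k ?e) = DD n k ?e \<and>
    (\<forall>e\<in>Eset n k. DD n k ?e e - basis ?e e \<in> vZv)"
    using DD_M[OF e0] barM_eq[OF kn] ourb_DD[OF e0] DD_vZv[OF e0] by simp
next
  let ?e = "w ` one_seq k"
  fix m assume "m \<in> Mset n k \<and> barM n k m = m \<and> (\<forall>e\<in>Eset n k. m e - basis ?e e \<in> vZv)"
  then have mM: "m \<in> Mset n k" and mb: "ourb n k m = m" and mv: "\<And>e. e \<in> Eset n k \<Longrightarrow> m e - basis ?e e \<in> vZv"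
    using barM_eq[OF kn] by auto
  let ?cm = "coord n k m"
  define c where "c h = ?cm h - (if h = ?e then 1 else 0)" for h
  have m_lin: "m = lin n k ?cm" using lin_coord[OF mM] by simp
  have x_lin: "(\<lambda>f. m f - DD n k ?e f) = lin n k c"
    unfolding c_def lin_diff using m_lin lin_delta[OF e0] by simp
  have cm_bar: "barQ (?cm g) = ?cm g" if "g \<in> Eset n k" for g
  proof -
    have "lin n k (\<lambda>g. barQ (?cm g)) = lin n k ?cm" using mb m_lin ourb_M[OF mM] by simp
    from lin_unique[OF this that] show ?thesis .
  qed
  have c_bar: "barQ (c g) = c g" if "g \<in> Eset n k" for g
    using cm_bar[OF that] by (simp add: c_def)
  have c_v: "c g \<in> vZv" if "g \<in> Eset n k" and top: "\<And>h. h \<in> Eset n k \<Longrightarrow> c h \<noteq> 0 \<Longrightarrow> \<Sum>h \<le> \<Sum>g" for g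
  proof -
    have "c g = lin n k c g" using lin_top[OF that(1) top] by simp
    also have "\<dots> = m g - DD n k ?e g" using x_lin by metis
    also have "\<dots> = (m g - basis ?e g) - (DD n k ?e g - basis ?e g)" by simp
    finally have "c g = (m g - basis ?e g) - (DD n k ?e g - basis ?e g)" .
    then show ?thesis using vZv_diff[OF mv[OF that(1)] DD_vZv[OF e0 that(1)]] by simp
  qed
  have c0: "c g = 0" if "g \<in> Eset n k" for g
  proof (rule ccontr)
    assume "c g \<noteq> 0"
    let ?S = "{h \<in> Eset n k. c h \<noteq> 0}"
    have "finite ?S" "?S \<noteq> {}" using that \<open>c g \<noteq> 0\<close> by auto
    then obtain h where h: "h \<in> ?S" "\<forall>h'\<in>?S. \<Sum>h' \<le> \<Sum>h" using max_sum_exists by blast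
    have hE: "h \<in> Eset n k" using h by simp
    have "c h \<in> vZv" by (rule c_v[OF hE]) (use h in auto)
    then have "c h = 0" using vZv_fixed_zero c_bar[OF hE] by blast
    then show False using h by simp
  qed
  have "lin n k c = lin n k (\<lambda>h. 0)" by (rule lin_cong) (simp add: c0)
  then have "(\<lambda>f. m f - DD n k ?e f) = (\<lambda>f. 0)" using x_lin by (simp add: lin_def)
  then show "m = DD n k ?e" by (metis (no_types, lifting) eq_iff_diff_eq_0 ext)
qed

lemma wordprod_Nil: "wordprod [] = id" by (simp add: wordprod_def)
lemma wordprod_Cons: "wordprod (i # ws) = sg i \<circ> wordprod ws" by (simp add: wordprod_def)
lemma wordprod_img: "wordprod (i # ws) ` A = sg i ` (wordprod ws ` A)"
  by (simp add: wordprod_Cons image_image)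
lemma Tminus_Cons: "Tminus_word (i # ws) m = U i (Tminus_word ws m)"
  by (simp add: Tminus_word_def U_def)
lemma Tminus_Nil: "Tminus_word [] m = m" by (simp add: Tminus_word_def)
lemma is_word_Cons: "is_word n (i # ws) \<longleftrightarrow> 1 \<le> i \<and> i < n \<and> is_word n ws"
  by (auto simp: is_word_def)

lemma img_word_E: "is_word n ws \<Longrightarrow> k \<le> n \<Longrightarrow> wordprod ws ` one_seq k \<in> Eset n k"
proof (induction ws)
  case Nil then show ?case by (simp add: wordprod_Nil one_E)
next
  case (Cons i ws)
  then have "wordprod ws ` one_seq k \<in> Eset n k" "1 \<le> i" "i < n" by (auto simp: is_word_Cons)
  then show ?case using E_sg by (simp only: wordprod_img)
qed

lemma sum_sg_le2: "finite f \<Longrightarrow> \<Sum>(sg i ` f) \<le> \<Sum>f + 1"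
proof -
  assume ff: "finite f"
  consider "i \<in> f" "Suc i \<notin> f" | "i \<notin> f" "Suc i \<in> f" | "i \<in> f \<longleftrightarrow> Suc i \<in> f" by blast
  then show ?thesis
  proof cases
    case 1 then show ?thesis using sum_sg_gen[OF ff] by simp
  next
    case 2 then show ?thesis using sum_sg_down[OF ff] by fastforce
  next
    case 3 then show ?thesis using sum_sg_same by simp
  qed
qed

lemma sum_word_le: "is_word n ws \<Longrightarrow> k \<le> n \<Longrightarrow> \<Sum>(wordprod ws ` one_seq k) \<le> \<Sum>(one_seq k) + length ws"
proof (induction ws)
  case Nil then show ?case by (simp add: wordprod_Nil)
next
  case (Cons i ws)
  have w: "is_word n ws" using Cons.prems by (simp add: is_word_Cons)
  have fin: "finite (wordprod ws ` one_seq k)" using E_fin_el[OF img_word_E[OF w Cons.prems(2)]] .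
  have "\<Sum>(wordprod (i # ws) ` one_seq k) = \<Sum>(sg i ` (wordprod ws ` one_seq k))"
    by (simp only: wordprod_img)
  also have "\<dots> \<le> \<Sum>(wordprod ws ` one_seq k) + 1" by (rule sum_sg_le2[OF fin])
  finally show ?case using Cons.IH[OF w Cons.prems(2)] by simp
qed

lemma tw_main: "is_word n ws \<Longrightarrow> k \<le> n \<Longrightarrow> \<Sum>(wordprod ws ` one_seq k) = \<Sum>(one_seq k) + length ws \<Longrightarrow>
  Tminus_word ws (basis (one_seq k)) = DD n k (wordprod ws ` one_seq k)"
proof (induction ws)
  case Nil then show ?case by (simp add: wordprod_Nil Tminus_Nil DD_one')
next
  case (Cons i ws)
  have w: "is_word n ws" and i: "1 \<le> i" "i < n" using Cons.prems by (auto simp: is_word_Cons)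
  let ?e = "wordprod ws ` one_seq k"
  have eE: "?e \<in> Eset n k" using img_word_E[OF w Cons.prems(2)] .
  have fin: "finite ?e" using E_fin_el[OF eE] .
  have img: "wordprod (i # ws) ` one_seq k = sg i ` ?e" by (simp only: wordprod_img)
  have s1: "\<Sum>(sg i ` ?e) = \<Sum>(one_seq k) + length ws + 1" using Cons.prems(3) img by simp
  have s2: "\<Sum>?e \<le> \<Sum>(one_seq k) + length ws" using sum_word_le[OF w Cons.prems(2)] .
  have s3: "\<Sum>(sg i ` ?e) \<le> \<Sum>?e + 1" using sum_sg_le2[OF fin] .
  have eq: "\<Sum>?e = \<Sum>(one_seq k) + length ws" using s1 s2 s3 by linarith
  have up: "\<Sum>(sg i ` ?e) = \<Sum>?e + 1" using s1 eq by simp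
  have pat: "i \<in> ?e \<and> Suc i \<notin> ?e"
  proof (rule ccontr)
    assume "\<not> (i \<in> ?e \<and> Suc i \<notin> ?e)"
    then consider "i \<notin> ?e" "Suc i \<in> ?e" | "i \<in> ?e \<longleftrightarrow> Suc i \<in> ?e" by blast
    then show False
    proof cases
      case 1 then show False using sum_sg_down[OF fin 1] up by simp
    next
      case 2 then show False using sum_sg_same[OF 2] up by simp
    qed
  qed
  have si: "sg i i = Suc i" "sg i (Suc i) = i" by (simp_all add: sg_apply)
  have d: "desc n (sg i ` ?e) i" using pat i si by (simp add: desc_def)
  have "DD n k (sg i ` ?e) = U i (DD n k ?e)" using P3[OF E_sg[OF eE i] d] by simp
  then show ?case using Cons.IH[OF w Cons.prems(2) eq] img by (simp add: Tminus_Cons)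
qed

lemma exists_word: "e \<in> Eset n k \<Longrightarrow>
  \<exists>ws. is_word n ws \<and> wordprod ws ` one_seq k = e \<and> \<Sum>(one_seq k) + length ws = \<Sum>e"
proof (induction "\<Sum>e" arbitrary: e rule: less_induct)
  case less
  show ?case
  proof (cases "e = one_seq k")
    case True then show ?thesis by (intro exI[of _ "[]"]) (simp add: is_word_def wordprod_Nil)
  next
    case False
    then obtain j where j: "1 \<le> j" "j < n" "j \<notin> e" "Suc j \<in> e"
        "sg j ` e \<in> Eset n k" "\<Sum>(sg j ` e) < \<Sum>e" using DD_step_obtain[OF less.prems] by metis
    obtain ws where ws: "is_word n ws" "wordprod ws ` one_seq k = sg j ` e"
      "\<Sum>(one_seq k) + length ws = \<Sum>(sg j ` e)" using less.hyps[OF j(6) j(5)] by blast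
    have "\<Sum>(sg j ` e) + 1 = \<Sum>e" using sum_sg_down[OF E_fin_el[OF less.prems] j(3,4)] .
    moreover have "wordprod (j # ws) ` one_seq k = e"
      using ws(2) by (simp add: wordprod_img)
    moreover have "is_word n (j # ws)" using ws(1) j(1,2) by (simp add: is_word_Cons)
    ultimately show ?thesis using ws(3) by (intro exI[of _ "j # ws"]) simp
  qed
qed

lemma wordprod_permutes: "is_word n ws \<Longrightarrow> wordprod ws permutes {1..n}"
proof (induction ws)
  case Nil show ?case unfolding wordprod_Nil by (rule permutes_id)
next
  case (Cons i ws)
  then have w: "is_word n ws" and i: "1 \<le> i" "i < n" by (auto simp: is_word_Cons)
  have "sg i permutes {1..n}" unfolding sg_def by (rule permutes_swap_id) (use i in auto)
  from permutes_compose[OF Cons.IH[OF w] this] show ?case by (simp only: wordprod_Cons)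
qed

lemma len_le: "is_word n ws \<Longrightarrow> len n (wordprod ws) \<le> length ws"
  unfolding len_def by (rule Least_le) blast

theorem mainTheorem6:
  fixes n k :: nat and w :: "nat \<Rightarrow> nat" and ws :: "nat list"
  assumes "1 \<le> k" and "k \<le> n - 1"
    and "w \<in> minWJ n k"
    and "reduced_word n w ws"
  shows "parKL n k w = Tminus_word ws (basis (one_seq k))"
proof -
  have kn: "k \<le> n" using assms(1,2) by linarith
  have wp: "w permutes {1..n}" and wmin: "\<And>u. u \<in> WJ n k \<Longrightarrow> len n w \<le> len n (w \<circ> u)"
    using assms(3) unfolding minWJ_def by auto
  have iw: "is_word n ws" and wws: "wordprod ws = w" and lws: "length ws = len n w"
    using assms(4) unfolding reduced_word_def by auto
  let ?e = "w ` one_seq k"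
  have eE: "?e \<in> Eset n k" using img_word_E[OF iw kn] wws by simp
  obtain ws' where ws': "is_word n ws'" "wordprod ws' ` one_seq k = ?e"
    "\<Sum>(one_seq k) + length ws' = \<Sum>?e" using exists_word[OF eE] by blast
  let ?x = "wordprod ws'"
  let ?u = "inv w \<circ> ?x"
  have xp: "?x permutes {1..n}" using wordprod_permutes[OF ws'(1)] .
  have up: "?u permutes {1..n}" using permutes_compose[OF xp permutes_inv[OF wp]] .
  have "?u ` {1..k} = inv w ` (?x ` {1..k})" by (simp add: image_image)
  also have "?x ` {1..k} = w ` {1..k}" using ws'(2) by (simp add: one_seq_def)
  also have "inv w ` (w ` {1..k}) = (inv w \<circ> w) ` {1..k}" by (simp only: image_comp)
  also have "\<dots> = {1..k}" using permutes_inv_o(2)[OF wp] by simp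
  finally have "?u \<in> WJ n k" using up by (simp add: WJ_def)
  then have l1: "len n w \<le> len n (w \<circ> ?u)" by (rule wmin)
  have "w \<circ> ?u = (w \<circ> inv w) \<circ> ?x" by (simp only: o_assoc)
  also have "\<dots> = ?x" using permutes_inv_o(1)[OF wp] by simp
  finally have "len n w \<le> len n ?x" using l1 by simp
  also have "\<dots> \<le> length ws'" using len_le[OF ws'(1)] .
  finally have "\<Sum>(one_seq k) + length ws \<le> \<Sum>?e" using lws ws'(3) by linarith
  moreover have "\<Sum>?e \<le> \<Sum>(one_seq k) + length ws" using sum_word_le[OF iw kn] wws by simp
  ultimately have "\<Sum>(wordprod ws ` one_seq k) = \<Sum>(one_seq k) + length ws" using wws by simp
  then have "Tminus_word ws (basis (one_seq k)) = DD n k ?e" using tw_main[OF iw kn] wws by simp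
  then show ?thesis using parKL_eq[OF kn eE] by simp
qed

end
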